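(* For every pure context $F$, term $t$ and variables $k,k',x$ with $k'\notin\mathrm{fv}(F)\cup\mathrm{fv}(t)$ and $x\notin\mathrm{fv}(F)$, we have $F[\mathcal{S}k.t] \approx \mathcal{S}k'.\,t\{\lambda x.\langle k'\,F[x]\rangle/k\}$.
   Context: The calculus $\lambda_{\mathcal S}$. Terms: $t ::= x \mid \lambda x.t \mid t\,t \mid \mathcal{S}k.t \mid \langle t\rangle$ (shift and reset); values: $v ::= \lambda x.t \mid x$. $\lambda x.t$ binds $x$, $\mathcal{S}k.t$ binds $k$; terms up to $\alpha$-conversion; $\mathrm{fv}$ free variables; capture-avoiding substitution $t\{v/x\}$. Pure contexts $F ::= [\,] \mid v\,F \mid F\,t$; evaluation contexts $E ::= [\,] \mid v\,E \mid E\,t \mid \langle E\rangle$. Reduction: $E[(\lambda x.t)\,v] \to E[t\{v/x\}]$; $E[\langle F[\mathcal{S}k.t]\rangle] \to E[\langle t\{\lambda x.\langle F[x]\rangle/k\}\rangle]$ ($x\notin\mathrm{fv}(F)$); $E[\langle v\rangle]\to E[v]$. $t\Downarrow t'$ iff $t\to^*t'$ and $t'$ irreducible. Normal forms: values, control stuck terms $F[\mathcal{S}k.t]$, open stuck terms $E[x\,v]$. Fresh: not free in the terms/contexts considered. Refined normal form bisimilarity $\approx$: for a relation $\mathcal R$ on terms, $E_0\mathrel{\mathcal R}E_1$ iff either $E_0=E_0'[\langle F_0\rangle]$, $E_1=E_1'[\langle F_1\rangle]$ ($F_i$ pure) with $E_0'[x]\mathrel{\mathcal R}E_1'[x]$ and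 $\langle F_0[x]\rangle\mathrel{\mathcal R}\langle F_1[x]\rangle$ ($x$ fresh), or $E_0=F_0$, $E_1=F_1$ pure with $F_0[x]\mathrel{\mathcal R}F_1[x]$ ($x$ fresh). $v\mathbin{@}y$ is $x\,y$ if $v=x$, $t\{y/x\}$ if $v=\lambda x.t$. $\mathcal R^{\mathrm{rnf}}$ on normal forms: $v_0\mathrel{\mathcal R^{\mathrm{rnf}}}v_1$ if $v_0\mathbin{@}x\mathrel{\mathcal R}v_1\mathbin{@}x$ ($x$ fresh); $E_0[x\,v_0]\mathrel{\mathcal R^{\mathrm{rnf}}}E_1[x\,v_1]$ if $E_0\mathrel{\mathcal R}E_1$ and $v_0\mathrel{\mathcal R^{\mathrm{rnf}}}v_1$; $F_0[\mathcal{S}k.t_0]\mathrel{\mathcal R^{\mathrm{rnf}}}F_1[\mathcal{S}k.t_1]$ if $\langle t_0\{\lambda x.\langle k'\,F_0[x]\rangle/k\}\rangle\mathrel{\mathcal R}\langle t_1\{\lambda x.\langle k'\,F_1[x]\rangle/k\}\rangle$ for fresh $k',x$. $\mathcal R$ is a refined normal form simulation if $t_0\mathrel{\mathcal R}t_1$ and $t_0\Downarrow t_0'$ imply $t_1\Downarrow t_1'$ with $t_0'\mathrel{\mathcal R^{\mathrm{rnf}}}t_1'$; a refined bisimulation if $\mathcal R$ and $\mathcal R^{-1}$ are refined simulations; $\approx$ is the largest refined normal form bisimulation. *)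

theory Defs
  imports Main
begin

datatype trm = Var nat | Lam nat trm | App trm trm | Shift nat trm | Reset trm

primrec fv :: "trm \<Rightarrow> nat set" where
  "fv (Var x) = {x}"
| "fv (Lam x t) = fv t - {x}"
| "fv (App t u) = fv t \<union> fv u"
| "fv (Shift k t) = fv t - {k}"
| "fv (Reset t) = fv t"

definition fresh :: "nat set \<Rightarrow> nat" where
  "fresh A = (LEAST n. n \<notin> A)"

primrec sub :: "(nat \<Rightarrow> trm) \<Rightarrow> trm \<Rightarrow> trm" where
  "sub \<sigma> (Var x) = \<sigma> x"
| "sub \<sigma> (App t u) = App (sub \<sigma> t) (sub \<sigma> u)"
| "sub \<sigma> (Lam y t) =
     (let z = fresh (\<Union>w\<in>fv t - {y}. fv (\<sigma> w)) in Lam z (sub (\<sigma>(y := Var z)) t))"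
| "sub \<sigma> (Shift y t) =
     (let z = fresh (\<Union>w\<in>fv t - {y}. fv (\<sigma> w)) in Shift z (sub (\<sigma>(y := Var z)) t))"
| "sub \<sigma> (Reset t) = Reset (sub \<sigma> t)"

definition subst :: "trm \<Rightarrow> nat \<Rightarrow> trm \<Rightarrow> trm" where
  "subst v x t = sub (Var(x := v)) t"

fun is_val :: "trm \<Rightarrow> bool" where
  "is_val (Var _) = True"
| "is_val (Lam _ _) = True"
| "is_val _ = False"

datatype ctx = Hole | CAppR trm ctx | CAppL ctx trm | CReset ctx

primrec plug :: "ctx \<Rightarrow> trm \<Rightarrow> trm" where
  "plug Hole t = t"
| "plug (CAppR v C) t = App v (plug C t)"
| "plug (CAppL C u) t = App (plug C t) u"
| "plug (CReset C) t = Reset (plug C t)"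

primrec ccomp :: "ctx \<Rightarrow> ctx \<Rightarrow> ctx" where
  "ccomp Hole D = D"
| "ccomp (CAppR v C) D = CAppR v (ccomp C D)"
| "ccomp (CAppL C u) D = CAppL (ccomp C D) u"
| "ccomp (CReset C) D = CReset (ccomp C D)"

primrec fvc :: "ctx \<Rightarrow> nat set" where
  "fvc Hole = {}"
| "fvc (CAppR v C) = fv v \<union> fvc C"
| "fvc (CAppL C u) = fvc C \<union> fv u"
| "fvc (CReset C) = fvc C"

primrec is_ectx :: "ctx \<Rightarrow> bool" where
  "is_ectx Hole = True"
| "is_ectx (CAppR v C) = (is_val v \<and> is_ectx C)"
| "is_ectx (CAppL C u) = is_ectx C"
| "is_ectx (CReset C) = is_ectx C"

primrec is_pctx :: "ctx \<Rightarrow> bool" where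
  "is_pctx Hole = True"
| "is_pctx (CAppR v C) = (is_val v \<and> is_pctx C)"
| "is_pctx (CAppL C u) = is_pctx C"
| "is_pctx (CReset C) = False"

inductive step :: "trm \<Rightarrow> trm \<Rightarrow> bool" where
  beta: "is_ectx E \<Longrightarrow> is_val v \<Longrightarrow>
     step (plug E (App (Lam x t) v)) (plug E (subst v x t))"
| shift: "is_ectx E \<Longrightarrow> is_pctx F \<Longrightarrow> x \<notin> fvc F \<Longrightarrow>
     step (plug E (Reset (plug F (Shift k t))))
          (plug E (Reset (subst (Lam x (Reset (plug F (Var x)))) k t)))"
| reset: "is_ectx E \<Longrightarrow> is_val v \<Longrightarrow> step (plug E (Reset v)) (plug E v)"

definition irreducible :: "trm \<Rightarrow> bool" where
  "irreducible t = (\<not> (\<exists>t'. step t t'))"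

definition eval :: "trm \<Rightarrow> trm \<Rightarrow> bool" where
  "eval t t' = (step\<^sup>*\<^sup>* t t' \<and> irreducible t')"

definition ctx_rel :: "(trm \<Rightarrow> trm \<Rightarrow> bool) \<Rightarrow> ctx \<Rightarrow> ctx \<Rightarrow> bool" where
  "ctx_rel R E0 E1 =
    ((\<exists>E0' F0 E1' F1 x. is_ectx E0' \<and> is_pctx F0 \<and> is_ectx E1' \<and> is_pctx F1 \<and>
        E0 = ccomp E0' (CReset F0) \<and> E1 = ccomp E1' (CReset F1) \<and>
        x \<notin> fvc E0 \<and> x \<notin> fvc E1 \<and>
        R (plug E0' (Var x)) (plug E1' (Var x)) \<and>
        R (Reset (plug F0 (Var x))) (Reset (plug F1 (Var x))))
     \<or> (is_pctx E0 \<and> is_pctx E1 \<and>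
        (\<exists>x. x \<notin> fvc E0 \<and> x \<notin> fvc E1 \<and> R (plug E0 (Var x)) (plug E1 (Var x)))))"

fun vapp :: "trm \<Rightarrow> nat \<Rightarrow> trm" where
  "vapp (Var x) y = App (Var x) (Var y)"
| "vapp (Lam x t) y = subst (Var y) x t"
| "vapp t y = App t (Var y)"

inductive rnf :: "(trm \<Rightarrow> trm \<Rightarrow> bool) \<Rightarrow> trm \<Rightarrow> trm \<Rightarrow> bool" for R where
  rnf_val: "is_val v0 \<Longrightarrow> is_val v1 \<Longrightarrow> x \<notin> fv v0 \<Longrightarrow> x \<notin> fv v1 \<Longrightarrow>
     R (vapp v0 x) (vapp v1 x) \<Longrightarrow> rnf R v0 v1"
| rnf_open: "is_ectx E0 \<Longrightarrow> is_ectx E1 \<Longrightarrow> is_val v0 \<Longrightarrow> is_val v1 \<Longrightarrow>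
     ctx_rel R E0 E1 \<Longrightarrow> rnf R v0 v1 \<Longrightarrow>
     rnf R (plug E0 (App (Var x) v0)) (plug E1 (App (Var x) v1))"
| rnf_ctrl: "is_pctx F0 \<Longrightarrow> is_pctx F1 \<Longrightarrow>
     k' \<notin> fv (plug F0 (Shift k0 t0)) \<Longrightarrow> k' \<notin> fv (plug F1 (Shift k1 t1)) \<Longrightarrow>
     x \<notin> fv (plug F0 (Shift k0 t0)) \<Longrightarrow> x \<notin> fv (plug F1 (Shift k1 t1)) \<Longrightarrow> x \<noteq> k' \<Longrightarrow>
     R (Reset (subst (Lam x (Reset (App (Var k') (plug F0 (Var x))))) k0 t0))
       (Reset (subst (Lam x (Reset (App (Var k') (plug F1 (Var x))))) k1 t1)) \<Longrightarrow>
     rnf R (plug F0 (Shift k0 t0)) (plug F1 (Shift k1 t1))"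

definition rnf_sim :: "(trm \<Rightarrow> trm \<Rightarrow> bool) \<Rightarrow> bool" where
  "rnf_sim R = (\<forall>t0 t1 t0'. R t0 t1 \<longrightarrow> eval t0 t0' \<longrightarrow>
                   (\<exists>t1'. eval t1 t1' \<and> rnf R t0' t1'))"

definition rnf_bisim :: "(trm \<Rightarrow> trm \<Rightarrow> bool) \<Rightarrow> bool" where
  "rnf_bisim R = (rnf_sim R \<and> rnf_sim (conversep R))"

definition rnf_bisimilar :: "trm \<Rightarrow> trm \<Rightarrow> bool" where
  "rnf_bisimilar t0 t1 = (\<exists>R. rnf_bisim R \<and> R t0 t1)"

end

theory Submission
  imports Defs
begin
lemma finite_fv[simp]: "finite (fv t)" by (induct t) auto

lemma fresh_notin: "finite A \<Longrightarrow> fresh A \<notin> A"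
  unfolding fresh_def by (metis LeastI_ex ex_new_if_finite infinite_UNIV_nat)

lemma fv_sub: "fv (sub \<sigma> t) = (\<Union>w\<in>fv t. fv (\<sigma> w))"
proof (induct t arbitrary: \<sigma>)
  case (Lam y t)
  let ?S = "\<Union>w\<in>fv t - {y}. fv (\<sigma> w)"
  define z where "z = fresh ?S"
  have zn: "z \<notin> ?S" unfolding z_def by (rule fresh_notin) auto
  have "fv (sub \<sigma> (Lam y t)) = fv (sub (\<sigma>(y := Var z)) t) - {z}"
    by (simp add: Let_def z_def)
  also have "\<dots> = (\<Union>w\<in>fv t. fv ((\<sigma>(y := Var z)) w)) - {z}" using Lam by simp
  also have "\<dots> = ?S" using zn by (auto split: if_split_asm)
  finally show ?case by simp
next
  case (Shift y t)
  let ?S = "\<Union>w\<in>fv t - {y}. fv (\<sigma> w)"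
  define z where "z = fresh ?S"
  have zn: "z \<notin> ?S" unfolding z_def by (rule fresh_notin) auto
  have "fv (sub \<sigma> (Shift y t)) = fv (sub (\<sigma>(y := Var z)) t) - {z}"
    by (simp add: Let_def z_def)
  also have "\<dots> = (\<Union>w\<in>fv t. fv ((\<sigma>(y := Var z)) w)) - {z}" using Shift by simp
  also have "\<dots> = ?S" using zn by (auto split: if_split_asm)
  finally show ?case by simp
qed auto

lemma sub_cong: "(\<And>w. w \<in> fv t \<Longrightarrow> \<sigma> w = \<tau> w) \<Longrightarrow> sub \<sigma> t = sub \<tau> t"
proof (induct t arbitrary: \<sigma> \<tau>)
  case (Var x) then show ?case by simp
next
  case (App a b) then show ?case by (metis UnCI fv.simps(3) sub.simps(2))
next
  case (Reset a) then show ?case by (metis fv.simps(5) sub.simps(5))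
next
  case (Lam y t)
  have e: "(\<Union>w\<in>fv t - {y}. fv (\<sigma> w)) = (\<Union>w\<in>fv t - {y}. fv (\<tau> w))"
    using Lam(2) by (metis (no_types, lifting) SUP_cong fv.simps(2))
  have "\<And>z. sub (\<sigma>(y := Var z)) t = sub (\<tau>(y := Var z)) t"
  proof (rule Lam(1))
    fix z w assume "w \<in> fv t" then show "(\<sigma>(y := Var z)) w = (\<tau>(y := Var z)) w"
      using Lam(2)[of w] by (cases "w = y") simp_all
  qed
  then show ?case unfolding sub.simps e by metis
next
  case (Shift y t)
  have e: "(\<Union>w\<in>fv t - {y}. fv (\<sigma> w)) = (\<Union>w\<in>fv t - {y}. fv (\<tau> w))"
    using Shift(2) by (metis (no_types, lifting) SUP_cong fv.simps(4))
  have "\<And>z. sub (\<sigma>(y := Var z)) t = sub (\<tau>(y := Var z)) t"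
  proof (rule Shift(1))
    fix z w assume "w \<in> fv t" then show "(\<sigma>(y := Var z)) w = (\<tau>(y := Var z)) w"
      using Shift(2)[of w] by (cases "w = y") simp_all
  qed
  then show ?case unfolding sub.simps e by metis
qed

lemma sub_comp: "sub \<sigma> (sub \<tau> t) = sub (\<lambda>w. sub \<sigma> (\<tau> w)) t"
proof (induct t arbitrary: \<sigma> \<tau>)
  case (Lam y t)
  define z1 where "z1 = fresh (\<Union>w\<in>fv t - {y}. fv (\<tau> w))"
  have z1n: "z1 \<notin> (\<Union>w\<in>fv t - {y}. fv (\<tau> w))" unfolding z1_def by (rule fresh_notin) auto
  define z2 where "z2 = fresh (\<Union>u\<in>fv (sub (\<tau>(y := Var z1)) t) - {z1}. fv (\<sigma> u))"
  define z3 where "z3 = fresh (\<Union>w\<in>fv t - {y}. fv (sub \<sigma> (\<tau> w)))"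
  have S: "(\<Union>u\<in>fv (sub (\<tau>(y := Var z1)) t) - {z1}. fv (\<sigma> u)) = (\<Union>w\<in>fv t - {y}. fv (sub \<sigma> (\<tau> w)))"
  proof -
    have "fv (sub (\<tau>(y := Var z1)) t) - {z1} = (\<Union>w\<in>fv t - {y}. fv (\<tau> w))"
      unfolding fv_sub using z1n by (auto split: if_split_asm)
    then show ?thesis by (auto simp: fv_sub)
  qed
  have z23: "z2 = z3" unfolding z2_def z3_def S ..
  have "sub \<sigma> (sub \<tau> (Lam y t)) = Lam z2 (sub (\<sigma>(z1 := Var z2)) (sub (\<tau>(y := Var z1)) t))"
    by (simp add: Let_def z1_def z2_def)
  also have "\<dots> = Lam z2 (sub (\<lambda>w. sub (\<sigma>(z1 := Var z2)) ((\<tau>(y := Var z1)) w)) t)" by (rule arg_cong[where f="Lam z2"], rule Lam)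
  also have "sub (\<lambda>w. sub (\<sigma>(z1 := Var z2)) ((\<tau>(y := Var z1)) w)) t
      = sub ((\<lambda>w. sub \<sigma> (\<tau> w))(y := Var z3)) t"
  proof (rule sub_cong)
    fix w assume w: "w \<in> fv t"
    show "sub (\<sigma>(z1 := Var z2)) ((\<tau>(y := Var z1)) w) = ((\<lambda>w. sub \<sigma> (\<tau> w))(y := Var z3)) w"
    proof (cases "w = y")
      case True then show ?thesis using z23 by simp
    next
      case False
      then have "z1 \<notin> fv (\<tau> w)" using z1n w by auto
      then show ?thesis using False by (auto intro!: sub_cong)
    qed
  qed
  finally have X: "sub \<sigma> (sub \<tau> (Lam y t)) = Lam z2 (sub ((\<lambda>w. sub \<sigma> (\<tau> w))(y := Var z3)) t)" .
  have Y: "sub (\<lambda>w. sub \<sigma> (\<tau> w)) (Lam y t) = Lam z3 (sub ((\<lambda>w. sub \<sigma> (\<tau> w))(y := Var z3)) t)"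
    unfolding sub.simps Let_def z3_def ..
  show ?case using X Y z23 by simp
next
  case (Shift y t)
  define z1 where "z1 = fresh (\<Union>w\<in>fv t - {y}. fv (\<tau> w))"
  have z1n: "z1 \<notin> (\<Union>w\<in>fv t - {y}. fv (\<tau> w))" unfolding z1_def by (rule fresh_notin) auto
  define z2 where "z2 = fresh (\<Union>u\<in>fv (sub (\<tau>(y := Var z1)) t) - {z1}. fv (\<sigma> u))"
  define z3 where "z3 = fresh (\<Union>w\<in>fv t - {y}. fv (sub \<sigma> (\<tau> w)))"
  have S: "(\<Union>u\<in>fv (sub (\<tau>(y := Var z1)) t) - {z1}. fv (\<sigma> u)) = (\<Union>w\<in>fv t - {y}. fv (sub \<sigma> (\<tau> w)))"
  proof -
    have "fv (sub (\<tau>(y := Var z1)) t) - {z1} = (\<Union>w\<in>fv t - {y}. fv (\<tau> w))"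
      unfolding fv_sub using z1n by (auto split: if_split_asm)
    then show ?thesis by (auto simp: fv_sub)
  qed
  have z23: "z2 = z3" unfolding z2_def z3_def S ..
  have "sub \<sigma> (sub \<tau> (Shift y t)) = Shift z2 (sub (\<sigma>(z1 := Var z2)) (sub (\<tau>(y := Var z1)) t))"
    by (simp add: Let_def z1_def z2_def)
  also have "\<dots> = Shift z2 (sub (\<lambda>w. sub (\<sigma>(z1 := Var z2)) ((\<tau>(y := Var z1)) w)) t)" by (rule arg_cong[where f="Shift z2"], rule Shift)
  also have "sub (\<lambda>w. sub (\<sigma>(z1 := Var z2)) ((\<tau>(y := Var z1)) w)) t
      = sub ((\<lambda>w. sub \<sigma> (\<tau> w))(y := Var z3)) t"
  proof (rule sub_cong)
    fix w assume w: "w \<in> fv t"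
    show "sub (\<sigma>(z1 := Var z2)) ((\<tau>(y := Var z1)) w) = ((\<lambda>w. sub \<sigma> (\<tau> w))(y := Var z3)) w"
    proof (cases "w = y")
      case True then show ?thesis using z23 by simp
    next
      case False
      then have "z1 \<notin> fv (\<tau> w)" using z1n w by auto
      then show ?thesis using False by (auto intro!: sub_cong)
    qed
  qed
  finally have X: "sub \<sigma> (sub \<tau> (Shift y t)) = Shift z2 (sub ((\<lambda>w. sub \<sigma> (\<tau> w))(y := Var z3)) t)" .
  have Y: "sub (\<lambda>w. sub \<sigma> (\<tau> w)) (Shift y t) = Shift z3 (sub ((\<lambda>w. sub \<sigma> (\<tau> w))(y := Var z3)) t)"
    unfolding sub.simps Let_def z3_def ..
  show ?case using X Y z23 by simp
qed auto

primrec subc :: "(nat \<Rightarrow> trm) \<Rightarrow> ctx \<Rightarrow> ctx" where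
  "subc \<sigma> Hole = Hole"
| "subc \<sigma> (CAppR v C) = CAppR (sub \<sigma> v) (subc \<sigma> C)"
| "subc \<sigma> (CAppL C u) = CAppL (subc \<sigma> C) (sub \<sigma> u)"
| "subc \<sigma> (CReset C) = CReset (subc \<sigma> C)"

lemma sub_plug: "sub \<sigma> (plug C t) = plug (subc \<sigma> C) (sub \<sigma> t)" by (induct C) auto
lemma fvc_subc: "fvc (subc \<sigma> C) = (\<Union>w\<in>fvc C. fv (\<sigma> w))" by (induct C) (auto simp: fv_sub)
lemma subc_cong: "(\<And>w. w \<in> fvc C \<Longrightarrow> \<sigma> w = \<tau> w) \<Longrightarrow> subc \<sigma> C = subc \<tau> C"
  by (induct C) (auto intro: sub_cong)
lemma fv_plug: "fv (plug C t) = fvc C \<union> fv t" by (induct C) auto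
lemma plug_ccomp: "plug (ccomp A B) t = plug A (plug B t)" by (induct A) auto
lemma ectx_ccomp[simp]: "is_ectx (ccomp A B) = (is_ectx A \<and> is_ectx B)" by (induct A) auto
lemma fvc_ccomp: "fvc (ccomp A B) = fvc A \<union> fvc B" by (induct A) auto
lemma pctx_ectx: "is_pctx F \<Longrightarrow> is_ectx F" by (induct F) auto
lemma plug_Var: "plug C a = Var x \<Longrightarrow> C = Hole \<and> a = Var x" by (cases C) auto
lemma plug_val: "is_val (plug C a) \<Longrightarrow> C = Hole \<and> is_val a" by (cases C) auto
lemma finite_fvc[simp]: "finite (fvc C)" by (induct C) auto

lemma sub_Var_Var[simp]: "sub \<sigma> (Var x) = \<sigma> x" by simp

definition Bv :: "nat \<Rightarrow> nat \<Rightarrow> trm" where "Bv K y = Lam y (Reset (App (Var K) (Var y)))"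

lemma fv_Bv[simp]: "y \<noteq> K \<Longrightarrow> fv (Bv K y) = {K}" by (auto simp: Bv_def)
lemma val_Bv[simp]: "is_val (Bv K y)" by (simp add: Bv_def)

lemma Bv_sub: assumes "\<sigma> K = Var K" "y \<noteq> K" shows "\<exists>y2. y2 \<noteq> K \<and> sub \<sigma> (Bv K y) = Bv K y2"
proof -
  define y2 where "y2 = fresh (\<Union>w\<in>fv (Reset (App (Var K) (Var y))) - {y}. fv (\<sigma> w))"
  have S: "(\<Union>w\<in>fv (Reset (App (Var K) (Var y))) - {y}. fv (\<sigma> w)) = {K}" using assms by auto
  have "y2 \<noteq> K" using fresh_notin[of "{K}"] S y2_def by auto
  moreover have y2e: "y2 = fresh {K}" using S y2_def by simp
  moreover have "sub \<sigma> (Bv K y) = Bv K y2" using assms unfolding Bv_def by (simp add: Let_def y2e)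
  ultimately show ?thesis by blast
qed

inductive corr :: "nat \<Rightarrow> trm \<Rightarrow> trm \<Rightarrow> bool" for K where
  cVar: "w \<noteq> K \<Longrightarrow> corr K (Var w) (Var w)"
| cLam: "z \<noteq> K \<Longrightarrow> z \<notin> fv (Lam x0 t0) \<Longrightarrow> z \<notin> fv (Lam x1 t1) \<Longrightarrow>
    corr K (sub (Var(x0 := Var z)) t0) (sub (Var(x1 := Var z)) t1) \<Longrightarrow> corr K (Lam x0 t0) (Lam x1 t1)"
| cShift: "z \<noteq> K \<Longrightarrow> z \<notin> fv (Shift x0 t0) \<Longrightarrow> z \<notin> fv (Shift x1 t1) \<Longrightarrow>
    corr K (sub (Var(x0 := Var z)) t0) (sub (Var(x1 := Var z)) t1) \<Longrightarrow> corr K (Shift x0 t0) (Shift x1 t1)"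
| cApp: "corr K a0 a1 \<Longrightarrow> corr K b0 b1 \<Longrightarrow> corr K (App a0 b0) (App a1 b1)"
| cReset: "corr K a0 a1 \<Longrightarrow> corr K (Reset a0) (Reset a1)"
| cRK: "y \<noteq> K \<Longrightarrow> corr K m0 m1 \<Longrightarrow> corr K (Reset (App (Var K) m0)) (Reset (App (Bv K y) m1))"

lemma ren_fv: "z \<notin> fv t - {x} \<Longrightarrow> fv (sub (Var(x := Var z)) t) - {z} = fv t - {x}"
  by (auto simp: fv_sub split: if_split_asm)

lemma corr_fv: "corr K a b \<Longrightarrow> fv b = fv a"
proof (induct rule: corr.induct)
  case (cLam z x0 t0 x1 t1)
  then show ?case using ren_fv[of z t0 x0] ren_fv[of z t1 x1] by auto
next
  case (cShift z x0 t0 x1 t1)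
  then show ?case using ren_fv[of z t0 x0] ren_fv[of z t1 x1] by auto
qed auto

lemma corr_val: "corr K a b \<Longrightarrow> is_val b = is_val a"
  by (induct rule: corr.induct) auto

lemma size_ren: "(\<forall>w. \<exists>u. \<sigma> w = Var u) \<Longrightarrow> size (sub \<sigma> t) = size t"
proof (induct t arbitrary: \<sigma>)
  case (Var x)
  then obtain u where "\<sigma> x = Var u" by blast
  then show ?case by simp
qed (auto simp: Let_def)

lemma corr_refl: "K \<notin> fv t \<Longrightarrow> corr K t t"
proof (induct "size t" arbitrary: t rule: less_induct)
  case less
  show ?case
  proof (cases t)
    case (Var x) then show ?thesis using less by (auto intro: cVar)
  next
    case (Lam x b)
    define z where "z = fresh (fv t \<union> {K})"
    have zn: "z \<notin> fv t \<union> {K}" unfolding z_def by (rule fresh_notin) auto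
    have "corr K (sub (Var(x := Var z)) b) (sub (Var(x := Var z)) b)"
      apply (rule less(1))
      using size_ren[of "Var(x := Var z)" b] Lam apply simp
      using less(2) zn Lam by (auto simp: fv_sub)
    then show ?thesis using Lam zn by (auto intro!: cLam)
  next
    case (Shift x b)
    define z where "z = fresh (fv t \<union> {K})"
    have zn: "z \<notin> fv t \<union> {K}" unfolding z_def by (rule fresh_notin) auto
    have "corr K (sub (Var(x := Var z)) b) (sub (Var(x := Var z)) b)"
      apply (rule less(1))
      using size_ren[of "Var(x := Var z)" b] Shift apply simp
      using less(2) zn Shift by (auto simp: fv_sub)
    then show ?thesis using Shift zn by (auto intro!: cShift)
  next
    case (App a b) then show ?thesis using less by (auto intro!: cApp)
  next
    case (Reset a) then show ?thesis using less by (auto intro!: cReset)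
  qed
qed

lemma ren_eq:
  assumes z0: "z0 \<notin> (\<Union>w\<in>fv t0 - {x0}. fv (\<sigma> w))" and zf: "z \<notin> fv t0 - {x0}"
  shows "sub (Var(z0 := Var z')) (sub (\<sigma>(x0 := Var z0)) t0)
       = sub (\<lambda>w. if w = z then Var z' else sub Var (\<sigma> w)) (sub (Var(x0 := Var z)) t0)"
  unfolding sub_comp
proof (rule sub_cong)
  fix w assume w: "w \<in> fv t0"
  show "sub (Var(z0 := Var z')) ((\<sigma>(x0 := Var z0)) w) =
        sub (\<lambda>w. if w = z then Var z' else sub Var (\<sigma> w)) ((Var(x0 := Var z)) w)"
  proof (cases "w = x0")
    case False
    then have "z0 \<notin> fv (\<sigma> w)" "w \<noteq> z" using z0 zf w by auto
    then show ?thesis using False by (auto intro!: sub_cong)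
  qed simp
qed

lemma corr_ren:
  "corr K t0 t1 \<Longrightarrow> (\<forall>w\<in>fv t0. \<exists>u. \<sigma>0 w = Var u \<and> \<sigma>1 w = Var u \<and> (u = K \<longleftrightarrow> w = K))
   \<Longrightarrow> corr K (sub \<sigma>0 t0) (sub \<sigma>1 t1)"
proof (induct arbitrary: \<sigma>0 \<sigma>1 rule: corr.induct)
  case (cVar w)
  then obtain u where "\<sigma>0 w = Var u" "\<sigma>1 w = Var u" "u \<noteq> K" by auto
  then show ?case by (simp add: corr.cVar)
next
  case (cApp a0 a1 b0 b1)
  have "corr K (sub \<sigma>0 a0) (sub \<sigma>1 a1)" by (rule cApp.hyps(2)) (use cApp.prems in auto)
  moreover have "corr K (sub \<sigma>0 b0) (sub \<sigma>1 b1)" by (rule cApp.hyps(4)) (use cApp.prems in auto)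
  ultimately show ?case by (simp add: corr.cApp)
next
  case (cReset a0 a1)
  have "corr K (sub \<sigma>0 a0) (sub \<sigma>1 a1)" by (rule cReset.hyps(2)) (use cReset.prems in auto)
  then show ?case by (simp add: corr.cReset)
next
  case (cRK y m0 m1)
  have "K \<in> fv (Reset (App (Var K) m0))" by simp
  with cRK.prems obtain u where u: "\<sigma>0 K = Var u" "\<sigma>1 K = Var u" "u = K" by blast
  obtain y2 where y2: "y2 \<noteq> K" "sub \<sigma>1 (Bv K y) = Bv K y2" using Bv_sub[of \<sigma>1 K y] u cRK.hyps(1) by blast
  have "corr K (sub \<sigma>0 m0) (sub \<sigma>1 m1)" by (rule cRK.hyps(3)) (use cRK.prems in auto)
  then show ?case using u y2 by (simp add: corr.cRK)
next
  case (cLam z x0 t0 x1 t1)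
  define z0 where "z0 = fresh (\<Union>w\<in>fv t0 - {x0}. fv (\<sigma>0 w))"
  have z0n: "z0 \<notin> (\<Union>w\<in>fv t0 - {x0}. fv (\<sigma>0 w))" unfolding z0_def by (rule fresh_notin) auto
  define z1 where "z1 = fresh (\<Union>w\<in>fv t1 - {x1}. fv (\<sigma>1 w))"
  have z1n: "z1 \<notin> (\<Union>w\<in>fv t1 - {x1}. fv (\<sigma>1 w))" unfolding z1_def by (rule fresh_notin) auto
  have s0: "sub \<sigma>0 (Lam x0 t0) = Lam z0 (sub (\<sigma>0(x0 := Var z0)) t0)" by (simp add: Let_def z0_def)
  have s1: "sub \<sigma>1 (Lam x1 t1) = Lam z1 (sub (\<sigma>1(x1 := Var z1)) t1)" by (simp add: Let_def z1_def)
  define z' where "z' = fresh (fv (sub \<sigma>0 (Lam x0 t0)) \<union> fv (sub \<sigma>1 (Lam x1 t1)) \<union> {K})"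
  have z'n: "z' \<notin> fv (sub \<sigma>0 (Lam x0 t0)) \<union> fv (sub \<sigma>1 (Lam x1 t1)) \<union> {K}"
    unfolding z'_def by (rule fresh_notin) auto
  let ?t0 = "\<lambda>w. if w = z then Var z' else sub Var (\<sigma>0 w)"
  let ?t1 = "\<lambda>w. if w = z then Var z' else sub Var (\<sigma>1 w)"
  have e0: "sub (Var(z0 := Var z')) (sub (\<sigma>0(x0 := Var z0)) t0) = sub ?t0 (sub (Var(x0 := Var z)) t0)"
    by (rule ren_eq) (use z0n cLam(2) in auto)
  have e1: "sub (Var(z1 := Var z')) (sub (\<sigma>1(x1 := Var z1)) t1) = sub ?t1 (sub (Var(x1 := Var z)) t1)"
    by (rule ren_eq) (use z1n cLam(3) in auto)
  have "corr K (sub ?t0 (sub (Var(x0 := Var z)) t0)) (sub ?t1 (sub (Var(x1 := Var z)) t1))"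
  proof (rule cLam(5), rule ballI)
    fix w assume w: "w \<in> fv (sub (Var(x0 := Var z)) t0)"
    show "\<exists>u. ?t0 w = Var u \<and> ?t1 w = Var u \<and> (u = K) = (w = K)"
    proof (cases "w = z")
      case True then show ?thesis using z'n cLam(1) by auto
    next
      case False
      then have "w \<in> fv (Lam x0 t0)" using w by (auto simp: fv_sub split: if_split_asm)
      then obtain u where "\<sigma>0 w = Var u" "\<sigma>1 w = Var u" "(u = K) = (w = K)" using cLam(6) by blast
      then show ?thesis using False by simp
    qed
  qed
  then have "corr K (sub (Var(z0 := Var z')) (sub (\<sigma>0(x0 := Var z0)) t0)) (sub (Var(z1 := Var z')) (sub (\<sigma>1(x1 := Var z1)) t1))"
    using e0 e1 by simp
  then show ?case unfolding s0 s1 apply (rule corr.cLam[where z=z', rotated 3]) using z'n s0 s1 by auto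
next
  case (cShift z x0 t0 x1 t1)
  define z0 where "z0 = fresh (\<Union>w\<in>fv t0 - {x0}. fv (\<sigma>0 w))"
  have z0n: "z0 \<notin> (\<Union>w\<in>fv t0 - {x0}. fv (\<sigma>0 w))" unfolding z0_def by (rule fresh_notin) auto
  define z1 where "z1 = fresh (\<Union>w\<in>fv t1 - {x1}. fv (\<sigma>1 w))"
  have z1n: "z1 \<notin> (\<Union>w\<in>fv t1 - {x1}. fv (\<sigma>1 w))" unfolding z1_def by (rule fresh_notin) auto
  have s0: "sub \<sigma>0 (Shift x0 t0) = Shift z0 (sub (\<sigma>0(x0 := Var z0)) t0)" by (simp add: Let_def z0_def)
  have s1: "sub \<sigma>1 (Shift x1 t1) = Shift z1 (sub (\<sigma>1(x1 := Var z1)) t1)" by (simp add: Let_def z1_def)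
  define z' where "z' = fresh (fv (sub \<sigma>0 (Shift x0 t0)) \<union> fv (sub \<sigma>1 (Shift x1 t1)) \<union> {K})"
  have z'n: "z' \<notin> fv (sub \<sigma>0 (Shift x0 t0)) \<union> fv (sub \<sigma>1 (Shift x1 t1)) \<union> {K}"
    unfolding z'_def by (rule fresh_notin) auto
  let ?t0 = "\<lambda>w. if w = z then Var z' else sub Var (\<sigma>0 w)"
  let ?t1 = "\<lambda>w. if w = z then Var z' else sub Var (\<sigma>1 w)"
  have e0: "sub (Var(z0 := Var z')) (sub (\<sigma>0(x0 := Var z0)) t0) = sub ?t0 (sub (Var(x0 := Var z)) t0)"
    by (rule ren_eq) (use z0n cShift(2) in auto)
  have e1: "sub (Var(z1 := Var z')) (sub (\<sigma>1(x1 := Var z1)) t1) = sub ?t1 (sub (Var(x1 := Var z)) t1)"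
    by (rule ren_eq) (use z1n cShift(3) in auto)
  have "corr K (sub ?t0 (sub (Var(x0 := Var z)) t0)) (sub ?t1 (sub (Var(x1 := Var z)) t1))"
  proof (rule cShift(5), rule ballI)
    fix w assume w: "w \<in> fv (sub (Var(x0 := Var z)) t0)"
    show "\<exists>u. ?t0 w = Var u \<and> ?t1 w = Var u \<and> (u = K) = (w = K)"
    proof (cases "w = z")
      case True then show ?thesis using z'n cShift(1) by auto
    next
      case False
      then have "w \<in> fv (Shift x0 t0)" using w by (auto simp: fv_sub split: if_split_asm)
      then obtain u where "\<sigma>0 w = Var u" "\<sigma>1 w = Var u" "(u = K) = (w = K)" using cShift(6) by blast
      then show ?thesis using False by simp
    qed
  qed
  then have "corr K (sub (Var(z0 := Var z')) (sub (\<sigma>0(x0 := Var z0)) t0)) (sub (Var(z1 := Var z')) (sub (\<sigma>1(x1 := Var z1)) t1))"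
    using e0 e1 by simp
  then show ?case unfolding s0 s1 apply (rule corr.cShift[where z=z', rotated 3]) using z'n s0 s1 by auto
next
qed
lemma corr_sub:
  "corr K t0 t1 \<Longrightarrow> (\<forall>w\<in>fv t0. (w = K \<longrightarrow> \<sigma>0 w = Var K \<and> \<sigma>1 w = Var K) \<and> (w \<noteq> K \<longrightarrow> corr K (\<sigma>0 w) (\<sigma>1 w)))
   \<Longrightarrow> corr K (sub \<sigma>0 t0) (sub \<sigma>1 t1)"
proof (induct arbitrary: \<sigma>0 \<sigma>1 rule: corr.induct)
  case (cVar w)
  then show ?case by simp
next
  case (cApp a0 a1 b0 b1)
  have "corr K (sub \<sigma>0 a0) (sub \<sigma>1 a1)" by (rule cApp.hyps(2)) (use cApp.prems in auto)
  moreover have "corr K (sub \<sigma>0 b0) (sub \<sigma>1 b1)" by (rule cApp.hyps(4)) (use cApp.prems in auto)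
  ultimately show ?case by (simp add: corr.cApp)
next
  case (cReset a0 a1)
  have "corr K (sub \<sigma>0 a0) (sub \<sigma>1 a1)" by (rule cReset.hyps(2)) (use cReset.prems in auto)
  then show ?case by (simp add: corr.cReset)
next
  case (cRK y m0 m1)
  have "K \<in> fv (Reset (App (Var K) m0))" by simp
  with cRK.prems have u: "\<sigma>0 K = Var K" "\<sigma>1 K = Var K" by blast+
  obtain y2 where y2: "y2 \<noteq> K" "sub \<sigma>1 (Bv K y) = Bv K y2" using Bv_sub[of \<sigma>1 K y] u cRK.hyps(1) by blast
  have "corr K (sub \<sigma>0 m0) (sub \<sigma>1 m1)" by (rule cRK.hyps(3)) (use cRK.prems in auto)
  then show ?case using u y2 by (simp add: corr.cRK)
next
  case (cLam z x0 t0 x1 t1)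
  define z0 where "z0 = fresh (\<Union>w\<in>fv t0 - {x0}. fv (\<sigma>0 w))"
  have z0n: "z0 \<notin> (\<Union>w\<in>fv t0 - {x0}. fv (\<sigma>0 w))" unfolding z0_def by (rule fresh_notin) auto
  define z1 where "z1 = fresh (\<Union>w\<in>fv t1 - {x1}. fv (\<sigma>1 w))"
  have z1n: "z1 \<notin> (\<Union>w\<in>fv t1 - {x1}. fv (\<sigma>1 w))" unfolding z1_def by (rule fresh_notin) auto
  have s0: "sub \<sigma>0 (Lam x0 t0) = Lam z0 (sub (\<sigma>0(x0 := Var z0)) t0)" by (simp add: Let_def z0_def)
  have s1: "sub \<sigma>1 (Lam x1 t1) = Lam z1 (sub (\<sigma>1(x1 := Var z1)) t1)" by (simp add: Let_def z1_def)
  define z' where "z' = fresh (fv (sub \<sigma>0 (Lam x0 t0)) \<union> fv (sub \<sigma>1 (Lam x1 t1)) \<union> {K})"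
  have z'n: "z' \<notin> fv (sub \<sigma>0 (Lam x0 t0)) \<union> fv (sub \<sigma>1 (Lam x1 t1)) \<union> {K}"
    unfolding z'_def by (rule fresh_notin) auto
  let ?t0 = "\<lambda>w. if w = z then Var z' else sub Var (\<sigma>0 w)"
  let ?t1 = "\<lambda>w. if w = z then Var z' else sub Var (\<sigma>1 w)"
  have e0: "sub (Var(z0 := Var z')) (sub (\<sigma>0(x0 := Var z0)) t0) = sub ?t0 (sub (Var(x0 := Var z)) t0)"
    by (rule ren_eq) (use z0n cLam(2) in auto)
  have e1: "sub (Var(z1 := Var z')) (sub (\<sigma>1(x1 := Var z1)) t1) = sub ?t1 (sub (Var(x1 := Var z)) t1)"
    by (rule ren_eq) (use z1n cLam(3) in auto)
  have "corr K (sub ?t0 (sub (Var(x0 := Var z)) t0)) (sub ?t1 (sub (Var(x1 := Var z)) t1))"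
  proof (rule cLam(5), rule ballI)
    fix w assume w: "w \<in> fv (sub (Var(x0 := Var z)) t0)"
    show "(w = K \<longrightarrow> ?t0 w = Var K \<and> ?t1 w = Var K) \<and> (w \<noteq> K \<longrightarrow> corr K (?t0 w) (?t1 w))"
    proof (cases "w = z")
      case True then show ?thesis using z'n cLam(1) by (auto intro: corr.cVar)
    next
      case False
      then have "w \<in> fv (Lam x0 t0)" using w by (auto simp: fv_sub split: if_split_asm)
      then have h: "(w = K \<longrightarrow> \<sigma>0 w = Var K \<and> \<sigma>1 w = Var K) \<and> (w \<noteq> K \<longrightarrow> corr K (\<sigma>0 w) (\<sigma>1 w))" using cLam(6) by blast
      show ?thesis
      proof (cases "w = K")
        case True then show ?thesis using h False by simp
      next
        case wK: False
        have "corr K (sub Var (\<sigma>0 w)) (sub Var (\<sigma>1 w))" by (rule corr_ren) (use h wK in auto)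
        then show ?thesis using False wK by simp
      qed
    qed
  qed
  then have "corr K (sub (Var(z0 := Var z')) (sub (\<sigma>0(x0 := Var z0)) t0)) (sub (Var(z1 := Var z')) (sub (\<sigma>1(x1 := Var z1)) t1))"
    using e0 e1 by simp
  then show ?case unfolding s0 s1 apply (rule corr.cLam[where z=z', rotated 3]) using z'n s0 s1 by auto
next
  case (cShift z x0 t0 x1 t1)
  define z0 where "z0 = fresh (\<Union>w\<in>fv t0 - {x0}. fv (\<sigma>0 w))"
  have z0n: "z0 \<notin> (\<Union>w\<in>fv t0 - {x0}. fv (\<sigma>0 w))" unfolding z0_def by (rule fresh_notin) auto
  define z1 where "z1 = fresh (\<Union>w\<in>fv t1 - {x1}. fv (\<sigma>1 w))"
  have z1n: "z1 \<notin> (\<Union>w\<in>fv t1 - {x1}. fv (\<sigma>1 w))" unfolding z1_def by (rule fresh_notin) auto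
  have s0: "sub \<sigma>0 (Shift x0 t0) = Shift z0 (sub (\<sigma>0(x0 := Var z0)) t0)" by (simp add: Let_def z0_def)
  have s1: "sub \<sigma>1 (Shift x1 t1) = Shift z1 (sub (\<sigma>1(x1 := Var z1)) t1)" by (simp add: Let_def z1_def)
  define z' where "z' = fresh (fv (sub \<sigma>0 (Shift x0 t0)) \<union> fv (sub \<sigma>1 (Shift x1 t1)) \<union> {K})"
  have z'n: "z' \<notin> fv (sub \<sigma>0 (Shift x0 t0)) \<union> fv (sub \<sigma>1 (Shift x1 t1)) \<union> {K}"
    unfolding z'_def by (rule fresh_notin) auto
  let ?t0 = "\<lambda>w. if w = z then Var z' else sub Var (\<sigma>0 w)"
  let ?t1 = "\<lambda>w. if w = z then Var z' else sub Var (\<sigma>1 w)"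
  have e0: "sub (Var(z0 := Var z')) (sub (\<sigma>0(x0 := Var z0)) t0) = sub ?t0 (sub (Var(x0 := Var z)) t0)"
    by (rule ren_eq) (use z0n cShift(2) in auto)
  have e1: "sub (Var(z1 := Var z')) (sub (\<sigma>1(x1 := Var z1)) t1) = sub ?t1 (sub (Var(x1 := Var z)) t1)"
    by (rule ren_eq) (use z1n cShift(3) in auto)
  have "corr K (sub ?t0 (sub (Var(x0 := Var z)) t0)) (sub ?t1 (sub (Var(x1 := Var z)) t1))"
  proof (rule cShift(5), rule ballI)
    fix w assume w: "w \<in> fv (sub (Var(x0 := Var z)) t0)"
    show "(w = K \<longrightarrow> ?t0 w = Var K \<and> ?t1 w = Var K) \<and> (w \<noteq> K \<longrightarrow> corr K (?t0 w) (?t1 w))"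
    proof (cases "w = z")
      case True then show ?thesis using z'n cShift(1) by (auto intro: corr.cVar)
    next
      case False
      then have "w \<in> fv (Shift x0 t0)" using w by (auto simp: fv_sub split: if_split_asm)
      then have h: "(w = K \<longrightarrow> \<sigma>0 w = Var K \<and> \<sigma>1 w = Var K) \<and> (w \<noteq> K \<longrightarrow> corr K (\<sigma>0 w) (\<sigma>1 w))" using cShift(6) by blast
      show ?thesis
      proof (cases "w = K")
        case True then show ?thesis using h False by simp
      next
        case wK: False
        have "corr K (sub Var (\<sigma>0 w)) (sub Var (\<sigma>1 w))" by (rule corr_ren) (use h wK in auto)
        then show ?thesis using False wK by simp
      qed
    qed
  qed
  then have "corr K (sub (Var(z0 := Var z')) (sub (\<sigma>0(x0 := Var z0)) t0)) (sub (Var(z1 := Var z')) (sub (\<sigma>1(x1 := Var z1)) t1))"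
    using e0 e1 by simp
  then show ?case unfolding s0 s1 apply (rule corr.cShift[where z=z', rotated 3]) using z'n s0 s1 by auto
next
qed

inductive_cases corr_AppE: "corr K (App a b) u"
inductive_cases corr_ResetE: "corr K (Reset a) u"
inductive_cases corr_LamE: "corr K (Lam x t) u"
inductive_cases corr_ShiftE: "corr K (Shift x t) u"
inductive_cases corr_VarE: "corr K (Var x) u"
inductive_cases corr_AppE2: "corr K u (App a b)"
inductive_cases corr_ResetE2: "corr K u (Reset a)"
inductive_cases corr_LamE2: "corr K u (Lam x t)"
inductive_cases corr_ShiftE2: "corr K u (Shift x t)"
inductive_cases corr_VarE2: "corr K u (Var x)"

inductive ccorr :: "nat \<Rightarrow> ctx \<Rightarrow> ctx \<Rightarrow> bool" for K where
  ccHole: "ccorr K Hole Hole"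
| ccAppR: "corr K v0 v1 \<Longrightarrow> ccorr K C0 C1 \<Longrightarrow> ccorr K (CAppR v0 C0) (CAppR v1 C1)"
| ccAppL: "ccorr K C0 C1 \<Longrightarrow> corr K u0 u1 \<Longrightarrow> ccorr K (CAppL C0 u0) (CAppL C1 u1)"
| ccReset: "ccorr K C0 C1 \<Longrightarrow> ccorr K (CReset C0) (CReset C1)"
| ccRK: "y \<noteq> K \<Longrightarrow> ccorr K C0 C1 \<Longrightarrow> ccorr K (CReset (CAppR (Var K) C0)) (CReset (CAppR (Bv K y) C1))"

inductive_cases ccorr_HoleE: "ccorr K Hole C"
inductive_cases ccorr_AppRE: "ccorr K (CAppR v C) X"
inductive_cases ccorr_AppLE: "ccorr K (CAppL C u) X"
inductive_cases ccorr_ResetE: "ccorr K (CReset C) X"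
inductive_cases ccorr_HoleE2: "ccorr K C Hole"
inductive_cases ccorr_AppRE2: "ccorr K X (CAppR v C)"
inductive_cases ccorr_AppLE2: "ccorr K X (CAppL C u)"
inductive_cases ccorr_ResetE2: "ccorr K X (CReset C)"

lemma ccorr_plug: "ccorr K C0 C1 \<Longrightarrow> corr K a0 a1 \<Longrightarrow> corr K (plug C0 a0) (plug C1 a1)"
  by (induct rule: ccorr.induct) (auto intro: corr.intros)
lemma ccorr_fvc: "ccorr K C0 C1 \<Longrightarrow> fvc C1 = fvc C0"
  by (induct rule: ccorr.induct) (auto dest: corr_fv)
lemma ccorr_ectx: "ccorr K C0 C1 \<Longrightarrow> is_ectx C1 = is_ectx C0"
  by (induct rule: ccorr.induct) (auto dest: corr_val)
lemma ccorr_pctx: "ccorr K C0 C1 \<Longrightarrow> is_pctx C1 = is_pctx C0"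
  by (induct rule: ccorr.induct) (auto dest: corr_val)

lemma plug_Lam: "plug C a = Lam x t \<Longrightarrow> C = Hole" by (cases C) auto

lemma decomp_fwd:
  "corr K (plug E0 r0) u1 \<Longrightarrow> r0 \<noteq> Var K \<Longrightarrow>
   (\<exists>E1 r1. u1 = plug E1 r1 \<and> ccorr K E0 E1 \<and> corr K r0 r1) \<or>
   (\<exists>m E0' E1 y m1. r0 = App (Var K) m \<and> E0 = ccomp E0' (CReset Hole) \<and>
      u1 = plug E1 (Reset (App (Bv K y) m1)) \<and> y \<noteq> K \<and> ccorr K E0' E1 \<and> corr K m m1)"
proof (induct "size E0" arbitrary: E0 u1 rule: less_induct)
  case less
  show ?case
  proof (cases E0)
    case Hole then show ?thesis using less by (intro disjI1 exI[of _ Hole] exI[of _ u1]) (auto intro: ccHole)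
  next
    case (CAppR v C)
    from less(2) CAppR obtain v1 m1 where u1: "u1 = App v1 m1" and c1: "corr K v v1" and c2: "corr K (plug C r0) m1"
      by (auto elim: corr_AppE)
    from less(1)[of C m1] c2 less(3) CAppR have "(\<exists>E1 r1. m1 = plug E1 r1 \<and> ccorr K C E1 \<and> corr K r0 r1) \<or>
   (\<exists>m E0' E1 y m1'. r0 = App (Var K) m \<and> C = ccomp E0' (CReset Hole) \<and>
      m1 = plug E1 (Reset (App (Bv K y) m1')) \<and> y \<noteq> K \<and> ccorr K E0' E1 \<and> corr K m m1')" by auto
    then show ?thesis
    proof
      assume "\<exists>E1 r1. m1 = plug E1 r1 \<and> ccorr K C E1 \<and> corr K r0 r1"
      then obtain E1 r1 where "m1 = plug E1 r1" "ccorr K C E1" "corr K r0 r1" by blast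
      then show ?thesis using u1 c1 CAppR by (intro disjI1 exI[of _ "CAppR v1 E1"] exI[of _ r1]) (auto intro: ccAppR)
    next
      assume "\<exists>m E0' E1 y m1'. r0 = App (Var K) m \<and> C = ccomp E0' (CReset Hole) \<and>
      m1 = plug E1 (Reset (App (Bv K y) m1')) \<and> y \<noteq> K \<and> ccorr K E0' E1 \<and> corr K m m1'"
      then obtain m E0' E1 y m1' where h: "r0 = App (Var K) m" "C = ccomp E0' (CReset Hole)"
        "m1 = plug E1 (Reset (App (Bv K y) m1'))" "y \<noteq> K" "ccorr K E0' E1" "corr K m m1'" by blast
      show ?thesis using h u1 c1 CAppR
        by (intro disjI2 exI[of _ m] exI[of _ "CAppR v E0'"] exI[of _ "CAppR v1 E1"] exI[of _ y] exI[of _ m1'])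
          (auto intro: ccAppR)
    qed
  next
    case (CAppL C u)
    from less(2) CAppL obtain v1 m1 where u1: "u1 = App m1 v1" and c1: "corr K u v1" and c2: "corr K (plug C r0) m1"
      by (auto elim: corr_AppE)
    from less(1)[of C m1] c2 less(3) CAppL have "(\<exists>E1 r1. m1 = plug E1 r1 \<and> ccorr K C E1 \<and> corr K r0 r1) \<or>
   (\<exists>m E0' E1 y m1'. r0 = App (Var K) m \<and> C = ccomp E0' (CReset Hole) \<and>
      m1 = plug E1 (Reset (App (Bv K y) m1')) \<and> y \<noteq> K \<and> ccorr K E0' E1 \<and> corr K m m1')" by auto
    then show ?thesis
    proof
      assume "\<exists>E1 r1. m1 = plug E1 r1 \<and> ccorr K C E1 \<and> corr K r0 r1"
      then obtain E1 r1 where "m1 = plug E1 r1" "ccorr K C E1" "corr K r0 r1" by blast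
      then show ?thesis using u1 c1 CAppL by (intro disjI1 exI[of _ "CAppL E1 v1"] exI[of _ r1]) (auto intro: ccAppL)
    next
      assume "\<exists>m E0' E1 y m1'. r0 = App (Var K) m \<and> C = ccomp E0' (CReset Hole) \<and>
      m1 = plug E1 (Reset (App (Bv K y) m1')) \<and> y \<noteq> K \<and> ccorr K E0' E1 \<and> corr K m m1'"
      then obtain m E0' E1 y m1' where h: "r0 = App (Var K) m" "C = ccomp E0' (CReset Hole)"
        "m1 = plug E1 (Reset (App (Bv K y) m1'))" "y \<noteq> K" "ccorr K E0' E1" "corr K m m1'" by blast
      show ?thesis using h u1 c1 CAppL
        by (intro disjI2 exI[of _ m] exI[of _ "CAppL E0' u"] exI[of _ "CAppL E1 v1"] exI[of _ y] exI[of _ m1'])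
          (auto intro: ccAppL)
    qed
  next
    case (CReset C)
    from less(2) CReset have "corr K (Reset (plug C r0)) u1" by simp
    then have "(\<exists>m1. u1 = Reset m1 \<and> corr K (plug C r0) m1) \<or>
      (\<exists>y m0 m1. plug C r0 = App (Var K) m0 \<and> u1 = Reset (App (Bv K y) m1) \<and> y \<noteq> K \<and> corr K m0 m1)"
      by (auto elim: corr_ResetE)
    then show ?thesis
    proof
      assume "\<exists>m1. u1 = Reset m1 \<and> corr K (plug C r0) m1"
      then obtain m1 where cReset: "u1 = Reset m1" "corr K (plug C r0) m1" by blast
      from less(1)[of C m1] cReset less(3) CReset have "(\<exists>E1 r1. m1 = plug E1 r1 \<and> ccorr K C E1 \<and> corr K r0 r1) \<or>
       (\<exists>m E0' E1 y m1'. r0 = App (Var K) m \<and> C = ccomp E0' (CReset Hole) \<and>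
        m1 = plug E1 (Reset (App (Bv K y) m1')) \<and> y \<noteq> K \<and> ccorr K E0' E1 \<and> corr K m m1')" by auto
      then show ?thesis
      proof
        assume "\<exists>E1 r1. m1 = plug E1 r1 \<and> ccorr K C E1 \<and> corr K r0 r1"
        then obtain E1 r1 where "m1 = plug E1 r1" "ccorr K C E1" "corr K r0 r1" by blast
        then show ?thesis using cReset CReset by (intro disjI1 exI[of _ "CReset E1"] exI[of _ r1]) (auto intro: ccReset)
      next
        assume "\<exists>m E0' E1 y m1'. r0 = App (Var K) m \<and> C = ccomp E0' (CReset Hole) \<and>
        m1 = plug E1 (Reset (App (Bv K y) m1')) \<and> y \<noteq> K \<and> ccorr K E0' E1 \<and> corr K m m1'"
        then obtain m E0' E1 y m1' where h: "r0 = App (Var K) m" "C = ccomp E0' (CReset Hole)"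
          "m1 = plug E1 (Reset (App (Bv K y) m1'))" "y \<noteq> K" "ccorr K E0' E1" "corr K m m1'" by blast
        show ?thesis using h cReset CReset
          by (intro disjI2 exI[of _ m] exI[of _ "CReset E0'"] exI[of _ "CReset E1"] exI[of _ y] exI[of _ m1'])
            (auto intro: ccReset)
      qed
    next
      assume "\<exists>y m0 m1. plug C r0 = App (Var K) m0 \<and> u1 = Reset (App (Bv K y) m1) \<and> y \<noteq> K \<and> corr K m0 m1"
      then obtain y m0 m1 where cRK: "plug C r0 = App (Var K) m0" "u1 = Reset (App (Bv K y) m1)" "y \<noteq> K" "corr K m0 m1" by blast
      show ?thesis
      proof (cases C)
        case Hole then show ?thesis using cRK CReset
          by (intro disjI2 exI[of _ m0] exI[of _ Hole] exI[of _ Hole] exI[of _ y] exI[of _ m1]) (auto intro: ccHole)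
      next
        case (CAppR v C')
        with cRK have vK: "v = Var K" and pm: "plug C' r0 = m0" by auto
        from less(1)[of C' m1] cRK pm less(3) CReset CAppR have "(\<exists>E1 r1. m1 = plug E1 r1 \<and> ccorr K C' E1 \<and> corr K r0 r1) \<or>
         (\<exists>m E0' E1 y m1'. r0 = App (Var K) m \<and> C' = ccomp E0' (CReset Hole) \<and>
          m1 = plug E1 (Reset (App (Bv K y) m1')) \<and> y \<noteq> K \<and> ccorr K E0' E1 \<and> corr K m m1')" by auto
        then show ?thesis
        proof
          assume "\<exists>E1 r1. m1 = plug E1 r1 \<and> ccorr K C' E1 \<and> corr K r0 r1"
          then obtain E1 r1 where "m1 = plug E1 r1" "ccorr K C' E1" "corr K r0 r1" by blast
          then show ?thesis using cRK CReset CAppR vK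
            by (intro disjI1 exI[of _ "CReset (CAppR (Bv K y) E1)"] exI[of _ r1]) (auto intro: ccRK)
        next
          assume "\<exists>m E0' E1 y m1'. r0 = App (Var K) m \<and> C' = ccomp E0' (CReset Hole) \<and>
          m1 = plug E1 (Reset (App (Bv K y) m1')) \<and> y \<noteq> K \<and> ccorr K E0' E1 \<and> corr K m m1'"
          then obtain m E0' E1 y' m1' where h: "r0 = App (Var K) m" "C' = ccomp E0' (CReset Hole)"
            "m1 = plug E1 (Reset (App (Bv K y') m1'))" "y' \<noteq> K" "ccorr K E0' E1" "corr K m m1'" by blast
          show ?thesis using h cRK CReset CAppR vK
            by (intro disjI2 exI[of _ m] exI[of _ "CReset (CAppR (Var K) E0')"] exI[of _ "CReset (CAppR (Bv K y) E1)"]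
                exI[of _ y'] exI[of _ m1']) (auto intro: ccRK)
        qed
      next
        case (CAppL C' u)
        with cRK have "plug C' r0 = Var K" by auto
        then show ?thesis using less(3) by (auto dest: plug_Var)
      next
        case (CReset C') with cRK show ?thesis by auto
      qed
    qed
  qed
qed

lemma corr_App_inv: "corr K (App a b) u \<Longrightarrow> \<exists>a1 b1. u = App a1 b1 \<and> corr K a a1 \<and> corr K b b1"
  by (auto elim: corr_AppE)
lemma corr_App2_inv: "corr K u (App a b) \<Longrightarrow> \<exists>a0 b0. u = App a0 b0 \<and> corr K a0 a \<and> corr K b0 b"
  by (auto elim: corr_AppE2)
lemma corr_Reset_inv: "corr K (Reset a) u \<Longrightarrow> (\<exists>m1. u = Reset m1 \<and> corr K a m1) \<or>
   (\<exists>y m0 m1. a = App (Var K) m0 \<and> u = Reset (App (Bv K y) m1) \<and> y \<noteq> K \<and> corr K m0 m1)"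
  by (auto elim: corr_ResetE)
lemma corr_Reset2_inv: "corr K u (Reset a) \<Longrightarrow> (\<exists>m0. u = Reset m0 \<and> corr K m0 a) \<or>
   (\<exists>y m0 m1. a = App (Bv K y) m1 \<and> u = Reset (App (Var K) m0) \<and> y \<noteq> K \<and> corr K m0 m1)"
  by (auto elim: corr_ResetE2)

lemma ccorr_AppR_inv: "ccorr K (CAppR v C) X \<Longrightarrow> \<exists>v1 X'. X = CAppR v1 X' \<and> corr K v v1 \<and> ccorr K C X'"
  by (auto elim: ccorr_AppRE)
lemma ccorr_AppL_inv: "ccorr K (CAppL C u) X \<Longrightarrow> \<exists>u1 X'. X = CAppL X' u1 \<and> corr K u u1 \<and> ccorr K C X'"
  by (auto elim: ccorr_AppLE)
lemma ccorr_Reset_inv: "ccorr K (CReset a) X \<Longrightarrow> (\<exists>X'. X = CReset X' \<and> ccorr K a X') \<or>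
  (\<exists>y C0 C1. a = CAppR (Var K) C0 \<and> X = CReset (CAppR (Bv K y) C1) \<and> y \<noteq> K \<and> ccorr K C0 C1)"
  by (auto elim: ccorr_ResetE)
lemma ccorr_AppR2_inv: "ccorr K X (CAppR v C) \<Longrightarrow> \<exists>v0 X'. X = CAppR v0 X' \<and> corr K v0 v \<and> ccorr K X' C"
  by (auto elim: ccorr_AppRE2)
lemma ccorr_AppL2_inv: "ccorr K X (CAppL C u) \<Longrightarrow> \<exists>u0 X'. X = CAppL X' u0 \<and> corr K u0 u \<and> ccorr K X' C"
  by (auto elim: ccorr_AppLE2)
lemma ccorr_Reset2_inv: "ccorr K X (CReset a) \<Longrightarrow> (\<exists>X'. X = CReset X' \<and> ccorr K X' a) \<or>
  (\<exists>y C0 C1. a = CAppR (Bv K y) C1 \<and> X = CReset (CAppR (Var K) C0) \<and> y \<noteq> K \<and> ccorr K C0 C1)"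
  by (auto elim: ccorr_ResetE2)

lemma decomp_bwd:
  "corr K u0 (plug E1 r1) \<Longrightarrow> (\<forall>y. r1 \<noteq> Bv K y) \<Longrightarrow>
   (\<exists>E0 r0. u0 = plug E0 r0 \<and> ccorr K E0 E1 \<and> corr K r0 r1) \<or>
   (\<exists>E0 E1' y m0 m1. E1 = ccomp E1' (CReset Hole) \<and> r1 = App (Bv K y) m1 \<and> y \<noteq> K \<and>
      u0 = plug E0 (Reset (App (Var K) m0)) \<and> ccorr K E0 E1' \<and> corr K m0 m1)"
proof (induct "size E1" arbitrary: E1 u0 rule: less_induct)
  case less
  show ?case
  proof (cases E1)
    case Hole then show ?thesis using less by (intro disjI1 exI[of _ Hole] exI[of _ u0]) (auto intro: ccHole)
  next
    case (CAppR v C)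
    from less(2) CAppR obtain v0 m0 where u0: "u0 = App v0 m0" and c1: "corr K v0 v" and c2: "corr K m0 (plug C r1)"
      using corr_App2_inv by fastforce
    from less(1)[of C m0] c2 less(3) CAppR have "(\<exists>E0 r0. m0 = plug E0 r0 \<and> ccorr K E0 C \<and> corr K r0 r1) \<or>
   (\<exists>E0 E1' y m0' m1. C = ccomp E1' (CReset Hole) \<and> r1 = App (Bv K y) m1 \<and> y \<noteq> K \<and>
      m0 = plug E0 (Reset (App (Var K) m0')) \<and> ccorr K E0 E1' \<and> corr K m0' m1)" by auto
    then show ?thesis
    proof
      assume "\<exists>E0 r0. m0 = plug E0 r0 \<and> ccorr K E0 C \<and> corr K r0 r1"
      then obtain E0 r0 where "m0 = plug E0 r0" "ccorr K E0 C" "corr K r0 r1" by blast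
      then show ?thesis using u0 c1 CAppR by (intro disjI1 exI[of _ "CAppR v0 E0"] exI[of _ r0]) (auto intro: ccAppR)
    next
      assume "\<exists>E0 E1' y m0' m1. C = ccomp E1' (CReset Hole) \<and> r1 = App (Bv K y) m1 \<and> y \<noteq> K \<and>
      m0 = plug E0 (Reset (App (Var K) m0')) \<and> ccorr K E0 E1' \<and> corr K m0' m1"
      then obtain E0 E1' y m0' m1 where h: "C = ccomp E1' (CReset Hole)" "r1 = App (Bv K y) m1" "y \<noteq> K"
        "m0 = plug E0 (Reset (App (Var K) m0'))" "ccorr K E0 E1'" "corr K m0' m1" by blast
      show ?thesis using h u0 c1 CAppR
        by (intro disjI2 exI[of _ "CAppR v0 E0"] exI[of _ "CAppR v E1'"] exI[of _ y] exI[of _ m0'] exI[of _ m1])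
          (auto intro: ccAppR)
    qed
  next
    case (CAppL C u)
    from less(2) CAppL obtain v0 m0 where u0: "u0 = App m0 v0" and c1: "corr K v0 u" and c2: "corr K m0 (plug C r1)"
      using corr_App2_inv by fastforce
    from less(1)[of C m0] c2 less(3) CAppL have "(\<exists>E0 r0. m0 = plug E0 r0 \<and> ccorr K E0 C \<and> corr K r0 r1) \<or>
   (\<exists>E0 E1' y m0' m1. C = ccomp E1' (CReset Hole) \<and> r1 = App (Bv K y) m1 \<and> y \<noteq> K \<and>
      m0 = plug E0 (Reset (App (Var K) m0')) \<and> ccorr K E0 E1' \<and> corr K m0' m1)" by auto
    then show ?thesis
    proof
      assume "\<exists>E0 r0. m0 = plug E0 r0 \<and> ccorr K E0 C \<and> corr K r0 r1"
      then obtain E0 r0 where "m0 = plug E0 r0" "ccorr K E0 C" "corr K r0 r1" by blast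
      then show ?thesis using u0 c1 CAppL by (intro disjI1 exI[of _ "CAppL E0 v0"] exI[of _ r0]) (auto intro: ccAppL)
    next
      assume "\<exists>E0 E1' y m0' m1. C = ccomp E1' (CReset Hole) \<and> r1 = App (Bv K y) m1 \<and> y \<noteq> K \<and>
      m0 = plug E0 (Reset (App (Var K) m0')) \<and> ccorr K E0 E1' \<and> corr K m0' m1"
      then obtain E0 E1' y m0' m1 where h: "C = ccomp E1' (CReset Hole)" "r1 = App (Bv K y) m1" "y \<noteq> K"
        "m0 = plug E0 (Reset (App (Var K) m0'))" "ccorr K E0 E1'" "corr K m0' m1" by blast
      show ?thesis using h u0 c1 CAppL
        by (intro disjI2 exI[of _ "CAppL E0 v0"] exI[of _ "CAppL E1' u"] exI[of _ y] exI[of _ m0'] exI[of _ m1])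
          (auto intro: ccAppL)
    qed
  next
    case (CReset C)
    from less(2) CReset have "corr K u0 (Reset (plug C r1))" by simp
    then have "(\<exists>m0. u0 = Reset m0 \<and> corr K m0 (plug C r1)) \<or>
      (\<exists>y m0 m1. plug C r1 = App (Bv K y) m1 \<and> u0 = Reset (App (Var K) m0) \<and> y \<noteq> K \<and> corr K m0 m1)"
      by (rule corr_Reset2_inv)
    then show ?thesis
    proof
      assume "\<exists>m0. u0 = Reset m0 \<and> corr K m0 (plug C r1)"
      then obtain m0 where cR: "u0 = Reset m0" "corr K m0 (plug C r1)" by blast
      from less(1)[of C m0] cR less(3) CReset have "(\<exists>E0 r0. m0 = plug E0 r0 \<and> ccorr K E0 C \<and> corr K r0 r1) \<or>
       (\<exists>E0 E1' y m0' m1. C = ccomp E1' (CReset Hole) \<and> r1 = App (Bv K y) m1 \<and> y \<noteq> K \<and>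
        m0 = plug E0 (Reset (App (Var K) m0')) \<and> ccorr K E0 E1' \<and> corr K m0' m1)" by auto
      then show ?thesis
      proof
        assume "\<exists>E0 r0. m0 = plug E0 r0 \<and> ccorr K E0 C \<and> corr K r0 r1"
        then obtain E0 r0 where "m0 = plug E0 r0" "ccorr K E0 C" "corr K r0 r1" by blast
        then show ?thesis using cR CReset by (intro disjI1 exI[of _ "CReset E0"] exI[of _ r0]) (auto intro: ccReset)
      next
        assume "\<exists>E0 E1' y m0' m1. C = ccomp E1' (CReset Hole) \<and> r1 = App (Bv K y) m1 \<and> y \<noteq> K \<and>
        m0 = plug E0 (Reset (App (Var K) m0')) \<and> ccorr K E0 E1' \<and> corr K m0' m1"
        then obtain E0 E1' y m0' m1 where h: "C = ccomp E1' (CReset Hole)" "r1 = App (Bv K y) m1" "y \<noteq> K"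
          "m0 = plug E0 (Reset (App (Var K) m0'))" "ccorr K E0 E1'" "corr K m0' m1" by blast
        show ?thesis using h cR CReset
          by (intro disjI2 exI[of _ "CReset E0"] exI[of _ "CReset E1'"] exI[of _ y] exI[of _ m0'] exI[of _ m1])
            (auto intro: ccReset)
      qed
    next
      assume "\<exists>y m0 m1. plug C r1 = App (Bv K y) m1 \<and> u0 = Reset (App (Var K) m0) \<and> y \<noteq> K \<and> corr K m0 m1"
      then obtain y m0 m1 where cRK: "plug C r1 = App (Bv K y) m1" "u0 = Reset (App (Var K) m0)" "y \<noteq> K" "corr K m0 m1"
        by blast
      show ?thesis
      proof (cases C)
        case Hole then show ?thesis using cRK CReset
          by (intro disjI2 exI[of _ Hole] exI[of _ Hole] exI[of _ y] exI[of _ m0] exI[of _ m1]) (auto intro: ccHole)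
      next
        case (CAppR v C')
        with cRK have vK: "v = Bv K y" and pm: "plug C' r1 = m1" by auto
        from less(1)[of C' m0] cRK pm less(3) CReset CAppR have "(\<exists>E0 r0. m0 = plug E0 r0 \<and> ccorr K E0 C' \<and> corr K r0 r1) \<or>
         (\<exists>E0 E1' y m0' m1. C' = ccomp E1' (CReset Hole) \<and> r1 = App (Bv K y) m1 \<and> y \<noteq> K \<and>
          m0 = plug E0 (Reset (App (Var K) m0')) \<and> ccorr K E0 E1' \<and> corr K m0' m1)" by auto
        then show ?thesis
        proof
          assume "\<exists>E0 r0. m0 = plug E0 r0 \<and> ccorr K E0 C' \<and> corr K r0 r1"
          then obtain E0 r0 where "m0 = plug E0 r0" "ccorr K E0 C'" "corr K r0 r1" by blast
          then show ?thesis using cRK CReset CAppR vK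
            by (intro disjI1 exI[of _ "CReset (CAppR (Var K) E0)"] exI[of _ r0]) (auto intro: ccRK)
        next
          assume "\<exists>E0 E1' y m0' m1. C' = ccomp E1' (CReset Hole) \<and> r1 = App (Bv K y) m1 \<and> y \<noteq> K \<and>
          m0 = plug E0 (Reset (App (Var K) m0')) \<and> ccorr K E0 E1' \<and> corr K m0' m1"
          then obtain E0 E1' y' m0' m1' where h: "C' = ccomp E1' (CReset Hole)" "r1 = App (Bv K y') m1'" "y' \<noteq> K"
            "m0 = plug E0 (Reset (App (Var K) m0'))" "ccorr K E0 E1'" "corr K m0' m1'" by blast
          show ?thesis using h cRK CReset CAppR vK
            by (intro disjI2 exI[of _ "CReset (CAppR (Var K) E0)"] exI[of _ "CReset (CAppR (Bv K y) E1')"]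
                exI[of _ y'] exI[of _ m0'] exI[of _ m1']) (auto intro: ccRK)
        qed
      next
        case (CAppL C' u)
        with cRK have "plug C' r1 = Bv K y" by auto
        then have "C' = Hole" unfolding Bv_def by (rule plug_Lam)
        then show ?thesis using less(3) \<open>plug C' r1 = Bv K y\<close> by auto
      next
        case (CReset C') with cRK show ?thesis by auto
      qed
    qed
  qed
qed

lemma split_fwd: "ccorr K (ccomp E0 (CReset D0)) X \<Longrightarrow>
  \<exists>E1 D1. X = ccomp E1 (CReset D1) \<and> ccorr K E0 E1 \<and> ccorr K (CReset D0) (CReset D1)"
proof (induct "size E0" arbitrary: E0 X rule: less_induct)
  case less
  show ?case
  proof (cases E0)
    case Hole
    with less(2) have c: "ccorr K (CReset D0) X" by simp
    then obtain D1 where "X = CReset D1" using ccorr_Reset_inv by blast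
    then show ?thesis using c Hole by (intro exI[of _ Hole] exI[of _ D1]) (auto intro: ccHole)
  next
    case (CAppR v C)
    with less(2) obtain v1 X' where h: "X = CAppR v1 X'" "corr K v v1" "ccorr K (ccomp C (CReset D0)) X'"
      using ccorr_AppR_inv by fastforce
    from less(1)[of C X'] h CAppR obtain E1 D1 where "X' = ccomp E1 (CReset D1)" "ccorr K C E1"
      "ccorr K (CReset D0) (CReset D1)" by auto
    then show ?thesis using h CAppR by (intro exI[of _ "CAppR v1 E1"] exI[of _ D1]) (auto intro: ccAppR)
  next
    case (CAppL C u)
    with less(2) obtain u1 X' where h: "X = CAppL X' u1" "corr K u u1" "ccorr K (ccomp C (CReset D0)) X'"
      using ccorr_AppL_inv by fastforce
    from less(1)[of C X'] h CAppL obtain E1 D1 where "X' = ccomp E1 (CReset D1)" "ccorr K C E1"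
      "ccorr K (CReset D0) (CReset D1)" by auto
    then show ?thesis using h CAppL by (intro exI[of _ "CAppL E1 u1"] exI[of _ D1]) (auto intro: ccAppL)
  next
    case (CReset C)
    with less(2) have "ccorr K (CReset (ccomp C (CReset D0))) X" by simp
    then have "(\<exists>X'. X = CReset X' \<and> ccorr K (ccomp C (CReset D0)) X') \<or>
      (\<exists>y C0 C1. ccomp C (CReset D0) = CAppR (Var K) C0 \<and> X = CReset (CAppR (Bv K y) C1) \<and> y \<noteq> K \<and> ccorr K C0 C1)"
      by (rule ccorr_Reset_inv)
    then show ?thesis
    proof
      assume "\<exists>X'. X = CReset X' \<and> ccorr K (ccomp C (CReset D0)) X'"
      then obtain X' where h: "X = CReset X'" "ccorr K (ccomp C (CReset D0)) X'" by blast
      from less(1)[of C X'] h CReset obtain E1 D1 where "X' = ccomp E1 (CReset D1)" "ccorr K C E1"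
        "ccorr K (CReset D0) (CReset D1)" by auto
      then show ?thesis using h CReset by (intro exI[of _ "CReset E1"] exI[of _ D1]) (auto intro: ccReset)
    next
      assume "\<exists>y C0 C1. ccomp C (CReset D0) = CAppR (Var K) C0 \<and> X = CReset (CAppR (Bv K y) C1) \<and> y \<noteq> K \<and> ccorr K C0 C1"
      then obtain y C0 C1 where h: "ccomp C (CReset D0) = CAppR (Var K) C0" "X = CReset (CAppR (Bv K y) C1)"
        "y \<noteq> K" "ccorr K C0 C1" by blast
      then obtain C' where C': "C = CAppR (Var K) C'" "C0 = ccomp C' (CReset D0)" by (cases C) auto
      from less(1)[of C' C1] h C' CReset obtain E1 D1 where "C1 = ccomp E1 (CReset D1)" "ccorr K C' E1"
        "ccorr K (CReset D0) (CReset D1)" by auto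
      then show ?thesis using h C' CReset by (intro exI[of _ "CReset (CAppR (Bv K y) E1)"] exI[of _ D1]) (auto intro: ccRK)
    qed
  qed
qed

lemma split_bwd: "ccorr K X (ccomp E1 (CReset D1)) \<Longrightarrow>
  \<exists>E0 D0. X = ccomp E0 (CReset D0) \<and> ccorr K E0 E1 \<and> ccorr K (CReset D0) (CReset D1)"
proof (induct "size E1" arbitrary: E1 X rule: less_induct)
  case less
  show ?case
  proof (cases E1)
    case Hole
    with less(2) have c: "ccorr K X (CReset D1)" by simp
    then obtain D0 where "X = CReset D0" using ccorr_Reset2_inv by blast
    then show ?thesis using c Hole by (intro exI[of _ Hole] exI[of _ D0]) (auto intro: ccHole)
  next
    case (CAppR v C)
    with less(2) obtain v0 X' where h: "X = CAppR v0 X'" "corr K v0 v" "ccorr K X' (ccomp C (CReset D1))"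
      using ccorr_AppR2_inv by fastforce
    from less(1)[of C X'] h CAppR obtain E0 D0 where "X' = ccomp E0 (CReset D0)" "ccorr K E0 C"
      "ccorr K (CReset D0) (CReset D1)" by auto
    then show ?thesis using h CAppR by (intro exI[of _ "CAppR v0 E0"] exI[of _ D0]) (auto intro: ccAppR)
  next
    case (CAppL C u)
    with less(2) obtain u0 X' where h: "X = CAppL X' u0" "corr K u0 u" "ccorr K X' (ccomp C (CReset D1))"
      using ccorr_AppL2_inv by fastforce
    from less(1)[of C X'] h CAppL obtain E0 D0 where "X' = ccomp E0 (CReset D0)" "ccorr K E0 C"
      "ccorr K (CReset D0) (CReset D1)" by auto
    then show ?thesis using h CAppL by (intro exI[of _ "CAppL E0 u0"] exI[of _ D0]) (auto intro: ccAppL)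
  next
    case (CReset C)
    with less(2) have "ccorr K X (CReset (ccomp C (CReset D1)))" by simp
    then have "(\<exists>X'. X = CReset X' \<and> ccorr K X' (ccomp C (CReset D1))) \<or>
      (\<exists>y C0 C1. ccomp C (CReset D1) = CAppR (Bv K y) C1 \<and> X = CReset (CAppR (Var K) C0) \<and> y \<noteq> K \<and> ccorr K C0 C1)"
      by (rule ccorr_Reset2_inv)
    then show ?thesis
    proof
      assume "\<exists>X'. X = CReset X' \<and> ccorr K X' (ccomp C (CReset D1))"
      then obtain X' where h: "X = CReset X'" "ccorr K X' (ccomp C (CReset D1))" by blast
      from less(1)[of C X'] h CReset obtain E0 D0 where "X' = ccomp E0 (CReset D0)" "ccorr K E0 C"
        "ccorr K (CReset D0) (CReset D1)" by auto
      then show ?thesis using h CReset by (intro exI[of _ "CReset E0"] exI[of _ D0]) (auto intro: ccReset)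
    next
      assume "\<exists>y C0 C1. ccomp C (CReset D1) = CAppR (Bv K y) C1 \<and> X = CReset (CAppR (Var K) C0) \<and> y \<noteq> K \<and> ccorr K C0 C1"
      then obtain y C0 C1 where h: "ccomp C (CReset D1) = CAppR (Bv K y) C1" "X = CReset (CAppR (Var K) C0)"
        "y \<noteq> K" "ccorr K C0 C1" by blast
      then obtain C' where C': "C = CAppR (Bv K y) C'" "C1 = ccomp C' (CReset D1)" by (cases C) auto
      from less(1)[of C' C0] h C' CReset obtain E0 D0 where "C0 = ccomp E0 (CReset D0)" "ccorr K E0 C'"
        "ccorr K (CReset D0) (CReset D1)" by auto
      then show ?thesis using h C' CReset by (intro exI[of _ "CReset (CAppR (Var K) E0)"] exI[of _ D0]) (auto intro: ccRK)
    qed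
  qed
qed

lemma ren_cond: "a \<noteq> K \<Longrightarrow> b \<noteq> K \<Longrightarrow>
  \<forall>u\<in>S. \<exists>v. (Var(a := Var b)) u = Var v \<and> (Var(a := Var b)) u = Var v \<and> (v = K \<longleftrightarrow> u = K)"
  by auto

lemma upd_cond: "z \<noteq> K \<Longrightarrow> corr K v0 v1 \<Longrightarrow>
  \<forall>w\<in>S. (w = K \<longrightarrow> (Var(z := v0)) w = Var K \<and> (Var(z := v1)) w = Var K) \<and>
        (w \<noteq> K \<longrightarrow> corr K ((Var(z := v0)) w) ((Var(z := v1)) w))"
  by (auto intro: cVar)

lemma ccorr_body:
  assumes c: "ccorr K C0 C1" and x0: "x0 \<notin> fvc C0" and x1: "x1 \<notin> fvc C1" and z: "z \<noteq> K"
  shows "corr K (sub (Var(x0 := Var z)) (plug C0 (Var x0))) (sub (Var(x1 := Var z)) (plug C1 (Var x1)))"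
proof -
  have fe: "fvc C1 = fvc C0" using c by (rule ccorr_fvc)
  define w where "w = fresh (fvc C0 \<union> {K})"
  have wn: "w \<notin> fvc C0 \<union> {K}" unfolding w_def by (rule fresh_notin) auto
  have "corr K (plug C0 (Var w)) (plug C1 (Var w))" using c wn by (auto intro: ccorr_plug cVar)
  then have 1: "corr K (sub (Var(w := Var z)) (plug C0 (Var w))) (sub (Var(w := Var z)) (plug C1 (Var w)))"
    by (rule corr_ren) (rule ren_cond, use z wn in auto)
  have e0: "subc (Var(w := Var z)) C0 = subc (Var(x0 := Var z)) C0" by (rule subc_cong) (use wn x0 in auto)
  have e1: "subc (Var(w := Var z)) C1 = subc (Var(x1 := Var z)) C1" by (rule subc_cong) (use wn x1 fe in auto)
  show ?thesis using 1 e0 e1 by (simp add: sub_plug)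
qed

lemma lam_corr:
  assumes c: "ccorr K C0 C1" and x0: "x0 \<notin> fvc C0" and x1: "x1 \<notin> fvc C1"
  shows "corr K (Lam x0 (plug C0 (Var x0))) (Lam x1 (plug C1 (Var x1)))"
proof -
  have fe: "fvc C1 = fvc C0" using c by (rule ccorr_fvc)
  define z where "z = fresh (fvc C0 \<union> {K})"
  have zn: "z \<notin> fvc C0 \<union> {K}" unfolding z_def by (rule fresh_notin) auto
  show ?thesis
    by (rule cLam[where z=z]) (use zn x0 x1 fe in \<open>auto simp: fv_plug intro: ccorr_body[OF c x0 x1]\<close>)
qed

lemma bind_corr:
  assumes z: "z \<noteq> K" and z0: "z \<notin> fv t0 - {x0}" and z1: "z \<notin> fv t1 - {x1}"
    and c: "corr K (sub (Var(x0 := Var z)) t0) (sub (Var(x1 := Var z)) t1)" and cv: "corr K v0 v1"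
  shows "corr K (subst v0 x0 t0) (subst v1 x1 t1)"
proof -
  have "corr K (sub (Var(z := v0)) (sub (Var(x0 := Var z)) t0)) (sub (Var(z := v1)) (sub (Var(x1 := Var z)) t1))"
    by (rule corr_sub[OF c]) (rule upd_cond[OF z cv])
  moreover have "sub (Var(z := v0)) (sub (Var(x0 := Var z)) t0) = subst v0 x0 t0"
    unfolding subst_def sub_comp by (rule sub_cong) (use z0 in auto)
  moreover have "sub (Var(z := v1)) (sub (Var(x1 := Var z)) t1) = subst v1 x1 t1"
    unfolding subst_def sub_comp by (rule sub_cong) (use z1 in auto)
  ultimately show ?thesis by simp
qed

lemma beta_corr: "corr K (Lam x0 t0) (Lam x1 t1) \<Longrightarrow> corr K v0 v1 \<Longrightarrow> corr K (subst v0 x0 t0) (subst v1 x1 t1)"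
  by (erule corr_LamE) (rule bind_corr, auto)

lemma shift_corr: "corr K (Shift x0 t0) (Shift x1 t1) \<Longrightarrow> corr K v0 v1 \<Longrightarrow> corr K (subst v0 x0 t0) (subst v1 x1 t1)"
  by (erule corr_ShiftE) (rule bind_corr, auto)

lemma ccomp_Hole[simp]: "ccomp A Hole = A" by (induct A) auto
lemma plug_val_eq: "plug C b = v \<Longrightarrow> is_val v \<Longrightarrow> is_val b" using plug_val by blast

lemma prefix:
  "plug E1 a1 = plug E2 a2 \<Longrightarrow> is_ectx E1 \<Longrightarrow> is_ectx E2 \<Longrightarrow> \<not> is_val a1 \<Longrightarrow> \<not> is_val a2 \<Longrightarrow>
   (\<exists>C. E2 = ccomp E1 C \<and> a1 = plug C a2) \<or> (\<exists>C. E1 = ccomp E2 C \<and> a2 = plug C a1)"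
proof (induct E1 arbitrary: E2)
  case Hole then show ?case by auto
next
  case (CAppR v C1)
  show ?case
  proof (cases E2)
    case Hole then show ?thesis using CAppR by (intro disjI2 exI[of _ "CAppR v C1"]) simp
  next
    case (CAppR v' C2)
    with CAppR.prems have "v = v'" "plug C1 a1 = plug C2 a2" by auto
    with CAppR.hyps[of C2] CAppR.prems CAppR show ?thesis by auto
  next
    case (CAppL C2 u) then show ?thesis using CAppR.prems by (auto dest: plug_val)
  next
    case (CReset C2) then show ?thesis using CAppR.prems by auto
  qed
next
  case (CAppL C1 u)
  show ?case
  proof (cases E2)
    case Hole then show ?thesis using CAppL by (intro disjI2 exI[of _ "CAppL C1 u"]) simp
  next
    case (CAppR v' C2) then show ?thesis using CAppL.prems by (auto dest: plug_val)
  next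
    case (CAppL C2 u')
    with CAppL.prems have "u = u'" "plug C1 a1 = plug C2 a2" by auto
    with CAppL.hyps[of C2] CAppL.prems CAppL show ?thesis by auto
  next
    case (CReset C2) then show ?thesis using CAppL.prems by auto
  qed
next
  case (CReset C1)
  show ?case
  proof (cases E2)
    case Hole then show ?thesis using CReset by (intro disjI2 exI[of _ "CReset C1"]) simp
  next
    case (CReset C2)
    with CReset.prems have "plug C1 a1 = plug C2 a2" by auto
    with CReset.hyps[of C2] CReset.prems CReset show ?thesis by auto
  qed (use CReset.prems in auto)
qed

definition atomic :: "trm \<Rightarrow> bool" where
  "atomic a \<longleftrightarrow> \<not> is_val a \<and> (\<forall>C b. is_ectx C \<longrightarrow> \<not> is_val b \<longrightarrow> a = plug C b \<longrightarrow> C = Hole)"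

lemma atom_eq:
  assumes "atomic a1" "atomic a2" "is_ectx E1" "is_ectx E2" "plug E1 a1 = plug E2 a2"
  shows "E1 = E2 \<and> a1 = a2"
proof -
  have nv: "\<not> is_val a1" "\<not> is_val a2" using assms(1,2) unfolding atomic_def by auto
  from prefix[OF assms(5) assms(3,4) nv] show ?thesis
  proof
    assume "\<exists>C. E2 = ccomp E1 C \<and> a1 = plug C a2"
    then obtain C where C: "E2 = ccomp E1 C" "a1 = plug C a2" by blast
    then have "is_ectx C" using assms(4) by simp
    then have "C = Hole" using assms(1) C nv unfolding atomic_def by blast
    then show ?thesis using C by simp
  next
    assume "\<exists>C. E1 = ccomp E2 C \<and> a2 = plug C a1"
    then obtain C where C: "E1 = ccomp E2 C" "a2 = plug C a1" by blast
    then have "is_ectx C" using assms(3) by simp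
    then have "C = Hole" using assms(2) C nv unfolding atomic_def by blast
    then show ?thesis using C by simp
  qed
qed

lemma atomic_app: "is_val v \<Longrightarrow> is_val f \<Longrightarrow> atomic (App f v)"
  unfolding atomic_def
proof (intro conjI allI impI)
  fix C b assume h: "is_val v" "is_val f" "is_ectx C" "\<not> is_val b" "App f v = plug C b"
  show "C = Hole"
  proof (cases C)
    case (CAppR w C') then show ?thesis using h by (auto dest: plug_val)
  next
    case (CAppL C' u) then show ?thesis using h by (auto dest: plug_val)
  qed (use h in auto)
qed simp

lemma atomic_reset: "is_val v \<Longrightarrow> atomic (Reset v)"
  unfolding atomic_def
proof (intro conjI allI impI)
  fix C b assume h: "is_val v" "is_ectx C" "\<not> is_val b" "Reset v = plug C b"
  show "C = Hole"
  proof (cases C)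
    case (CReset C') then show ?thesis using h by (auto dest: plug_val)
  qed (use h in auto)
qed simp

lemma atomic_shift: "atomic (Shift k t)"
  unfolding atomic_def
proof (intro conjI allI impI)
  fix C b assume h: "Shift k t = plug C b"
  show "C = Hole" using h by (cases C) auto
qed simp

lemma pctx_ccomp_Reset: "is_pctx (ccomp A (CReset B)) = False" by (induct A) auto

lemma step_form: "step u w \<Longrightarrow>
  (\<exists>E x t v. is_ectx E \<and> is_val v \<and> u = plug E (App (Lam x t) v) \<and> w = plug E (subst v x t)) \<or>
  (\<exists>E v. is_ectx E \<and> is_val v \<and> u = plug E (Reset v) \<and> w = plug E v) \<or>
  (\<exists>E F k t. is_ectx E \<and> is_pctx F \<and> u = plug (ccomp E (CReset F)) (Shift k t))"
proof (induct rule: step.induct)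
  case (shift E F x k t)
  then show ?case by (intro disjI2 disjI2 exI[of _ E] exI[of _ F] exI[of _ k] exI[of _ t]) (simp add: plug_ccomp)
qed blast+

lemma atomic_beta: "is_val v \<Longrightarrow> atomic (App (Lam x t) v)" by (rule atomic_app) simp_all
lemma atomic_open: "is_val v \<Longrightarrow> atomic (App (Var x) v)" by (rule atomic_app) simp_all

lemma irred_atom:
  assumes E: "is_ectx E" and a: "atomic a" and n1: "\<forall>x t v. a \<noteq> App (Lam x t) v"
    and n2: "\<forall>v. a \<noteq> Reset v" and n3: "\<forall>k t. a \<noteq> Shift k t"
  shows "irreducible (plug E a)"
  unfolding irreducible_def
proof
  assume "\<exists>t'. step (plug E a) t'"
  then obtain w where "step (plug E a) w" by blast
  from step_form[OF this] show False
  proof (elim disjE exE conjE)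
    fix E' x t v assume h: "is_ectx E'" "is_val v" "plug E a = plug E' (App (Lam x t) v)"
    have "E = E' \<and> a = App (Lam x t) v" by (rule atom_eq[OF a atomic_beta[OF h(2)] E h(1) h(3)])
    then show False using n1 by blast
  next
    fix E' v assume h: "is_ectx E'" "is_val v" "plug E a = plug E' (Reset v)"
    have "E = E' \<and> a = Reset v" by (rule atom_eq[OF a atomic_reset[OF h(2)] E h(1) h(3)])
    then show False using n2 by blast
  next
    fix E' F k t assume h: "is_ectx E'" "is_pctx F" "plug E a = plug (ccomp E' (CReset F)) (Shift k t)"
    have "is_ectx (ccomp E' (CReset F))" using h pctx_ectx by simp
    then have "E = ccomp E' (CReset F) \<and> a = Shift k t" by (rule atom_eq[OF a atomic_shift E _ h(3)])
    then show False using n3 by blast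
  qed
qed

lemma irred_open: "is_ectx E \<Longrightarrow> is_val v \<Longrightarrow> irreducible (plug E (App (Var x) v))"
  by (rule irred_atom) (simp_all add: atomic_open)

lemma irred_ctrl:
  assumes F: "is_pctx F" shows "irreducible (plug F (Shift k t))"
  unfolding irreducible_def
proof
  assume "\<exists>t'. step (plug F (Shift k t)) t'"
  then obtain w where "step (plug F (Shift k t)) w" by blast
  have FE: "is_ectx F" using F by (rule pctx_ectx)
  from step_form[OF \<open>step _ w\<close>] show False
  proof (elim disjE exE conjE)
    fix E' x t' v assume h: "is_ectx E'" "is_val v" "plug F (Shift k t) = plug E' (App (Lam x t') v)"
    have "F = E' \<and> Shift k t = App (Lam x t') v" by (rule atom_eq[OF atomic_shift atomic_beta[OF h(2)] FE h(1) h(3)])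
    then show False by simp
  next
    fix E' v assume h: "is_ectx E'" "is_val v" "plug F (Shift k t) = plug E' (Reset v)"
    have "F = E' \<and> Shift k t = Reset v" by (rule atom_eq[OF atomic_shift atomic_reset[OF h(2)] FE h(1) h(3)])
    then show False by simp
  next
    fix E' F' k' t' assume h: "is_ectx E'" "is_pctx F'" "plug F (Shift k t) = plug (ccomp E' (CReset F')) (Shift k' t')"
    have "is_ectx (ccomp E' (CReset F'))" using h pctx_ectx by simp
    then have "F = ccomp E' (CReset F') \<and> Shift k t = Shift k' t'" by (rule atom_eq[OF atomic_shift atomic_shift FE _ h(3)])
    then show False using F pctx_ccomp_Reset by simp
  qed
qed

lemma not_val_plug_atom: "atomic a \<Longrightarrow> \<not> is_val (plug E a)"
  using plug_val unfolding atomic_def by blast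

lemma irred_val: "is_val v \<Longrightarrow> irreducible v"
  unfolding irreducible_def
proof
  assume v: "is_val v" and "\<exists>t'. step v t'"
  then obtain w where "step v w" by blast
  from step_form[OF this] show False
  proof (elim disjE exE conjE)
    fix E' x t' u assume "is_val u" "v = plug E' (App (Lam x t') u)"
    then show False using v not_val_plug_atom[OF atomic_beta] by metis
  next
    fix E' u assume "is_val u" "v = plug E' (Reset u)"
    then show False using v not_val_plug_atom[OF atomic_reset] by metis
  next
    fix E' F' k' t' assume "v = plug (ccomp E' (CReset F')) (Shift k' t')"
    then show False using v not_val_plug_atom[OF atomic_shift] by metis
  qed
qed

lemma step_reset_uniq:
  assumes E: "is_ectx E" and v: "is_val v" and s: "step (plug E (Reset v)) w"
  shows "w = plug E v"
  using step_form[OF s]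
proof (elim disjE exE conjE)
  fix E' x t u assume h: "is_ectx E'" "is_val u" "plug E (Reset v) = plug E' (App (Lam x t) u)"
  have "E = E' \<and> Reset v = App (Lam x t) u" by (rule atom_eq[OF atomic_reset[OF v] atomic_beta[OF h(2)] E h(1) h(3)])
  then show ?thesis by simp
next
  fix E' u assume h: "is_ectx E'" "is_val u" "plug E (Reset v) = plug E' (Reset u)" "w = plug E' u"
  have "E = E' \<and> Reset v = Reset u" by (rule atom_eq[OF atomic_reset[OF v] atomic_reset[OF h(2)] E h(1) h(3)])
  then show ?thesis using h(4) by simp
next
  fix E' F' k' t' assume h: "is_ectx E'" "is_pctx F'" "plug E (Reset v) = plug (ccomp E' (CReset F')) (Shift k' t')"
  have "is_ectx (ccomp E' (CReset F'))" using h pctx_ectx by simp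
  then have "E = ccomp E' (CReset F') \<and> Reset v = Shift k' t'" by (rule atom_eq[OF atomic_reset[OF v] atomic_shift E _ h(3)])
  then show ?thesis by simp
qed

lemma step_ctx: "step a b \<Longrightarrow> is_ectx C \<Longrightarrow> step (plug C a) (plug C b)"
proof (induct rule: step.induct)
  case (beta E v x t)
  then show ?case using step.beta[of "ccomp C E" v x t] by (simp add: plug_ccomp)
next
  case (shift E F x k t)
  then show ?case using step.shift[of "ccomp C E" F x k t] by (simp add: plug_ccomp)
next
  case (reset E v)
  then show ?case using step.reset[of "ccomp C E" v] by (simp add: plug_ccomp)
qed

lemma step_beta0: "is_val v \<Longrightarrow> step (App (Lam x t) v) (subst v x t)"
  using step.beta[of Hole v x t] by simp
lemma step_reset0: "is_val v \<Longrightarrow> step (Reset v) v"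
  using step.reset[of Hole v] by simp

lemma progress: "(\<exists>w. step u w) \<or> is_val u \<or> (\<exists>F k t. is_pctx F \<and> u = plug F (Shift k t)) \<or>
   (\<exists>E x v. is_ectx E \<and> is_val v \<and> u = plug E (App (Var x) v))"
proof (induct u)
  case (Var x) then show ?case by simp
next
  case (Lam x t) then show ?case by simp
next
  case (Shift k t) then show ?case by (intro disjI2 disjI2 disjI1 exI[of _ Hole]) simp
next
  case (App a b)
  show ?case
  proof (cases "is_val a")
    case va: True
    from App(2) show ?thesis
    proof (elim disjE exE conjE)
      fix w assume "step b w"
      then have "step (plug (CAppR a Hole) b) (plug (CAppR a Hole) w)" by (rule step_ctx) (simp add: va)
      then show ?thesis by auto
    next
      assume vb: "is_val b"
      show ?thesis
      proof (cases a)
        case (Var x) then show ?thesis using vb by (intro disjI2 disjI2 disjI2 exI[of _ Hole]) auto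
      next
        case (Lam x t) then show ?thesis using vb step_beta0 by blast
      qed (use va in auto)
    next
      fix F k t assume "is_pctx F" "b = plug F (Shift k t)"
      then show ?thesis using va by (intro disjI2 disjI2 disjI1 exI[of _ "CAppR a F"]) auto
    next
      fix E x v assume "is_ectx E" "is_val v" "b = plug E (App (Var x) v)"
      then show ?thesis using va by (intro disjI2 disjI2 disjI2 exI[of _ "CAppR a E"]) auto
    qed
  next
    case na: False
    from App(1) show ?thesis
    proof (elim disjE exE conjE)
      fix w assume "step a w"
      then have "step (plug (CAppL Hole b) a) (plug (CAppL Hole b) w)" by (rule step_ctx) simp
      then show ?thesis by auto
    next
      assume "is_val a" then show ?thesis using na by simp
    next
      fix F k t assume "is_pctx F" "a = plug F (Shift k t)"
      then show ?thesis by (intro disjI2 disjI2 disjI1 exI[of _ "CAppL F b"]) auto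
    next
      fix E x v assume "is_ectx E" "is_val v" "a = plug E (App (Var x) v)"
      then show ?thesis by (intro disjI2 disjI2 disjI2 exI[of _ "CAppL E b"]) auto
    qed
  qed
next
  case (Reset a)
  from Reset show ?case
  proof (elim disjE exE conjE)
    fix w assume "step a w"
    then have "step (plug (CReset Hole) a) (plug (CReset Hole) w)" by (rule step_ctx) simp
    then show ?thesis by auto
  next
    assume "is_val a" then show ?thesis using step_reset0 by blast
  next
    fix F k t assume F: "is_pctx F" "a = plug F (Shift k t)"
    have "fresh (fvc F) \<notin> fvc F" by (rule fresh_notin) simp
    then show ?thesis using step.shift[of Hole F "fresh (fvc F)" k t] F by auto
  next
    fix E x v assume "is_ectx E" "is_val v" "a = plug E (App (Var x) v)"
    then show ?thesis by (intro disjI2 disjI2 disjI2 exI[of _ "CReset E"]) auto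
  qed
qed

lemma corr_Lam_inv: "corr K (Lam x t) u \<Longrightarrow> \<exists>x1 t1. u = Lam x1 t1" by (auto elim: corr_LamE)
lemma corr_Lam2_inv: "corr K u (Lam x t) \<Longrightarrow> \<exists>x0 t0. u = Lam x0 t0" by (auto elim: corr_LamE2)
lemma corr_Shift_inv: "corr K (Shift x t) u \<Longrightarrow> \<exists>x1 t1. u = Shift x1 t1" by (auto elim: corr_ShiftE)
lemma corr_Shift2_inv: "corr K u (Shift x t) \<Longrightarrow> \<exists>x0 t0. u = Shift x0 t0" by (auto elim: corr_ShiftE2)
lemma corr_Var_inv: "corr K (Var x) u \<Longrightarrow> u = Var x \<and> x \<noteq> K" by (auto elim: corr_VarE)

lemma creset_pctx: assumes "ccorr K (CReset F0) (CReset F1)" shows "is_pctx F1 = is_pctx F0"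
  using ccorr_Reset_inv[OF assms]
proof (elim disjE exE conjE)
  fix X' assume "CReset F1 = CReset X'" "ccorr K F0 X'" then show ?thesis using ccorr_pctx by simp
next
  fix y C0 C1 assume "F0 = CAppR (Var K) C0" "CReset F1 = CReset (CAppR (Bv K y) C1)" "ccorr K C0 C1"
  then show ?thesis using ccorr_pctx[of K C0 C1] by simp
qed

lemma shift_res_corr:
  assumes c: "ccorr K C0 C1" and cs: "corr K (Shift k0 t0) (Shift k1 t1)" and x0: "x0 \<notin> fvc C0" and x1: "x1 \<notin> fvc C1"
  shows "corr K (Reset (subst (Lam x0 (plug C0 (Var x0))) k0 t0)) (Reset (subst (Lam x1 (plug C1 (Var x1))) k1 t1))"
  by (rule cReset, rule shift_corr[OF cs], rule lam_corr[OF c x0 x1])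

lemma Bv_neq[simp]: "App a b \<noteq> Bv K y" "Reset a \<noteq> Bv K y" "Shift k t \<noteq> Bv K y" "Var x \<noteq> Bv K y"
  by (simp_all add: Bv_def)

lemma fwd_step: assumes c: "corr K u0 u1" and s: "step u0 u0'" shows "\<exists>u1'. step u1 u1' \<and> corr K u0' u1'"
  using s
proof (cases rule: step.cases)
  case (beta E v x t)
  have "\<exists>E1 r1. u1 = plug E1 r1 \<and> ccorr K E E1 \<and> corr K (App (Lam x t) v) r1"
    using decomp_fwd[of K E "App (Lam x t) v" u1] c beta by simp
  then obtain E1 r1 where h: "u1 = plug E1 r1" "ccorr K E E1" "corr K (App (Lam x t) v) r1" by blast
  from corr_App_inv[OF h(3)] obtain l1 v1 where h2: "r1 = App l1 v1" "corr K (Lam x t) l1" "corr K v v1" by blast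
  from corr_Lam_inv[OF h2(2)] obtain x1 t1 where l1: "l1 = Lam x1 t1" by blast
  have e1: "is_ectx E1" using ccorr_ectx[OF h(2)] beta by simp
  have v1: "is_val v1" using corr_val[OF h2(3)] beta by simp
  have st: "step u1 (plug E1 (subst v1 x1 t1))" using step.beta[OF e1 v1, of x1 t1] h h2 l1 by simp
  have "corr K u0' (plug E1 (subst v1 x1 t1))"
    using ccorr_plug[OF h(2) beta_corr[of K x t x1 t1 v v1]] h2 l1 beta by simp
  then show ?thesis using st by blast
next
  case (shift E F x k t)
  have u0e: "u0 = plug (ccomp E (CReset F)) (Shift k t)" by (simp add: plug_ccomp shift)
  have "\<exists>X s1. u1 = plug X s1 \<and> ccorr K (ccomp E (CReset F)) X \<and> corr K (Shift k t) s1"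
    using decomp_fwd[of K "ccomp E (CReset F)" "Shift k t" u1] c u0e by simp
  then obtain X s1 where h: "u1 = plug X s1" "ccorr K (ccomp E (CReset F)) X" "corr K (Shift k t) s1" by blast
  from corr_Shift_inv[OF h(3)] obtain k1 t1 where s1: "s1 = Shift k1 t1" by blast
  from split_fwd[OF h(2)] obtain E1 F1 where h2: "X = ccomp E1 (CReset F1)" "ccorr K E E1"
    "ccorr K (CReset F) (CReset F1)" by blast
  have p1: "is_pctx F1" using creset_pctx[OF h2(3)] shift by simp
  have e1: "is_ectx E1" using ccorr_ectx[OF h2(2)] shift by simp
  define x1 where "x1 = fresh (fvc F1)"
  have x1n: "x1 \<notin> fvc F1" unfolding x1_def by (rule fresh_notin) simp
  have st: "step u1 (plug E1 (Reset (subst (Lam x1 (Reset (plug F1 (Var x1)))) k1 t1)))"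
    using step.shift[OF e1 p1 x1n, of k1 t1] h h2 s1 by (simp add: plug_ccomp)
  have "corr K (Reset (subst (Lam x (plug (CReset F) (Var x))) k t)) (Reset (subst (Lam x1 (plug (CReset F1) (Var x1))) k1 t1))"
    by (rule shift_res_corr[OF h2(3)]) (use h(3) s1 shift x1n in simp_all)
  then have "corr K u0' (plug E1 (Reset (subst (Lam x1 (Reset (plug F1 (Var x1)))) k1 t1)))"
    using ccorr_plug[OF h2(2)] shift by simp
  then show ?thesis using st by blast
next
  case (reset E v)
  have "\<exists>E1 r1. u1 = plug E1 r1 \<and> ccorr K E E1 \<and> corr K (Reset v) r1"
    using decomp_fwd[of K E "Reset v" u1] c reset by simp
  then obtain E1 r1 where h: "u1 = plug E1 r1" "ccorr K E E1" "corr K (Reset v) r1" by blast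
  from corr_Reset_inv[OF h(3)] reset obtain m1 where m1: "r1 = Reset m1" "corr K v m1" by auto
  have e1: "is_ectx E1" using ccorr_ectx[OF h(2)] reset by simp
  have v1: "is_val m1" using corr_val[OF m1(2)] reset by simp
  have st: "step u1 (plug E1 m1)" using step.reset[OF e1 v1] h m1 by simp
  have "corr K u0' (plug E1 m1)" using ccorr_plug[OF h(2) m1(2)] reset by simp
  then show ?thesis using st by blast
qed

definition KST :: "nat \<Rightarrow> trm \<Rightarrow> trm \<Rightarrow> bool" where
  "KST K u0 w \<longleftrightarrow> (\<exists>E0 E1 m0 m1. is_ectx E0 \<and> is_ectx E1 \<and> is_val m0 \<and> is_val m1 \<and> ccorr K E0 E1 \<and>
     corr K m0 m1 \<and> u0 = plug E0 (Reset (App (Var K) m0)) \<and> w = plug E1 (Reset (Reset (App (Var K) m1))))"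

lemma bwd_step: assumes c: "corr K u0 u1" and s: "step u1 u1'"
  shows "(\<exists>u0'. step u0 u0' \<and> corr K u0' u1') \<or> KST K u0 u1'"
  using s
proof (cases rule: step.cases)
  case (beta E1 v1 x1 t1)
  have "(\<exists>E0 r0. u0 = plug E0 r0 \<and> ccorr K E0 E1 \<and> corr K r0 (App (Lam x1 t1) v1)) \<or>
   (\<exists>E0 E1' y m0 m1. E1 = ccomp E1' (CReset Hole) \<and> App (Lam x1 t1) v1 = App (Bv K y) m1 \<and> y \<noteq> K \<and>
      u0 = plug E0 (Reset (App (Var K) m0)) \<and> ccorr K E0 E1' \<and> corr K m0 m1)"
    by (rule decomp_bwd) (use c beta in simp_all)
  then show ?thesis
  proof
    assume "\<exists>E0 r0. u0 = plug E0 r0 \<and> ccorr K E0 E1 \<and> corr K r0 (App (Lam x1 t1) v1)"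
    then obtain E0 r0 where h: "u0 = plug E0 r0" "ccorr K E0 E1" "corr K r0 (App (Lam x1 t1) v1)" by blast
    from corr_App2_inv[OF h(3)] obtain l0 v0 where h2: "r0 = App l0 v0" "corr K l0 (Lam x1 t1)" "corr K v0 v1" by blast
    from corr_Lam2_inv[OF h2(2)] obtain x0 t0 where l0: "l0 = Lam x0 t0" by blast
    have e0: "is_ectx E0" using ccorr_ectx[OF h(2)] beta by simp
    have v0: "is_val v0" using corr_val[OF h2(3)] beta by simp
    have st: "step u0 (plug E0 (subst v0 x0 t0))" using step.beta[OF e0 v0, of x0 t0] h h2 l0 by simp
    have "corr K (plug E0 (subst v0 x0 t0)) u1'"
      using ccorr_plug[OF h(2) beta_corr[of K x0 t0 x1 t1 v0 v1]] h2 l0 beta by simp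
    then show ?thesis using st by blast
  next
    assume "\<exists>E0 E1' y m0 m1. E1 = ccomp E1' (CReset Hole) \<and> App (Lam x1 t1) v1 = App (Bv K y) m1 \<and> y \<noteq> K \<and>
      u0 = plug E0 (Reset (App (Var K) m0)) \<and> ccorr K E0 E1' \<and> corr K m0 m1"
    then obtain E0 E1' y m0 m1 where h: "E1 = ccomp E1' (CReset Hole)" "App (Lam x1 t1) v1 = App (Bv K y) m1" "y \<noteq> K"
      "u0 = plug E0 (Reset (App (Var K) m0))" "ccorr K E0 E1'" "corr K m0 m1" by blast
    have eq: "x1 = y" "t1 = Reset (App (Var K) (Var y))" "v1 = m1" using h(2) by (auto simp: Bv_def)
    have e1: "is_ectx E1'" using h(1) beta by simp
    have e0: "is_ectx E0" using ccorr_ectx[OF h(5)] e1 by simp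
    have m0: "is_val m0" using corr_val[OF h(6)] beta eq by simp
    have "subst m1 y (Reset (App (Var K) (Var y))) = Reset (App (Var K) m1)" using h(3) by (simp add: subst_def)
    then have "u1' = plug E1' (Reset (Reset (App (Var K) m1)))" using beta eq h(1) by (simp add: plug_ccomp)
    then have "KST K u0 u1'" unfolding KST_def using e0 e1 m0 beta eq h by blast
    then show ?thesis by blast
  qed
next
  case (shift E1 F1 x1 k1 t1)
  have u1e: "u1 = plug (ccomp E1 (CReset F1)) (Shift k1 t1)" by (simp add: plug_ccomp shift)
  have "(\<exists>X s0. u0 = plug X s0 \<and> ccorr K X (ccomp E1 (CReset F1)) \<and> corr K s0 (Shift k1 t1)) \<or>
   (\<exists>E0 E1' y m0 m1. ccomp E1 (CReset F1) = ccomp E1' (CReset Hole) \<and> Shift k1 t1 = App (Bv K y) m1 \<and> y \<noteq> K \<and>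
      u0 = plug E0 (Reset (App (Var K) m0)) \<and> ccorr K E0 E1' \<and> corr K m0 m1)"
    by (rule decomp_bwd) (use c u1e in simp_all)
  then obtain X s0 where h: "u0 = plug X s0" "ccorr K X (ccomp E1 (CReset F1))" "corr K s0 (Shift k1 t1)" by auto
  from corr_Shift2_inv[OF h(3)] obtain k0 t0 where s0: "s0 = Shift k0 t0" by blast
  from split_bwd[OF h(2)] obtain E0 F0 where h2: "X = ccomp E0 (CReset F0)" "ccorr K E0 E1"
    "ccorr K (CReset F0) (CReset F1)" by blast
  have p0: "is_pctx F0" using creset_pctx[OF h2(3)] shift by simp
  have e0: "is_ectx E0" using ccorr_ectx[OF h2(2)] shift by simp
  define x0 where "x0 = fresh (fvc F0)"
  have x0n: "x0 \<notin> fvc F0" unfolding x0_def by (rule fresh_notin) simp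
  have st: "step u0 (plug E0 (Reset (subst (Lam x0 (Reset (plug F0 (Var x0)))) k0 t0)))"
    using step.shift[OF e0 p0 x0n, of k0 t0] h h2 s0 by (simp add: plug_ccomp)
  have "corr K (Reset (subst (Lam x0 (plug (CReset F0) (Var x0))) k0 t0)) (Reset (subst (Lam x1 (plug (CReset F1) (Var x1))) k1 t1))"
    by (rule shift_res_corr[OF h2(3)]) (use h(3) s0 shift x0n in simp_all)
  then have "corr K (plug E0 (Reset (subst (Lam x0 (Reset (plug F0 (Var x0)))) k0 t0))) u1'"
    using ccorr_plug[OF h2(2)] shift by simp
  then show ?thesis using st by blast
next
  case (reset E1 v1)
  have "(\<exists>E0 r0. u0 = plug E0 r0 \<and> ccorr K E0 E1 \<and> corr K r0 (Reset v1)) \<or>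
   (\<exists>E0 E1' y m0 m1. E1 = ccomp E1' (CReset Hole) \<and> Reset v1 = App (Bv K y) m1 \<and> y \<noteq> K \<and>
      u0 = plug E0 (Reset (App (Var K) m0)) \<and> ccorr K E0 E1' \<and> corr K m0 m1)"
    by (rule decomp_bwd) (use c reset in simp_all)
  then obtain E0 r0 where h: "u0 = plug E0 r0" "ccorr K E0 E1" "corr K r0 (Reset v1)" by auto
  from corr_Reset2_inv[OF h(3)] reset obtain m0 where m0: "r0 = Reset m0" "corr K m0 v1" by auto
  have e0: "is_ectx E0" using ccorr_ectx[OF h(2)] reset by simp
  have v0: "is_val m0" using corr_val[OF m0(2)] reset by simp
  have st: "step u0 (plug E0 m0)" using step.reset[OF e0 v0] h m0 by simp
  have "corr K (plug E0 m0) u1'" using ccorr_plug[OF h(2) m0(2)] reset by simp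
  then show ?thesis using st by blast
qed

definition RR :: "nat \<Rightarrow> trm \<Rightarrow> trm \<Rightarrow> bool" where
  "RR K u0 u1 \<longleftrightarrow> corr K u0 u1 \<or> (\<exists>E z. is_ectx E \<and> u1 = plug E (Reset (Var z)) \<and> corr K u0 (plug E (Var z)))"

lemma corr_RR: "corr K a b \<Longrightarrow> RR K a b" by (simp add: RR_def)

lemma val_rnf: assumes c: "corr K v0 v1" and v: "is_val v0" shows "rnf (RR K) v0 v1"
proof -
  have fe: "fv v1 = fv v0" using c by (rule corr_fv)
  define x where "x = fresh (fv v0 \<union> {K})"
  have xn: "x \<notin> fv v0 \<union> {K}" unfolding x_def by (rule fresh_notin) simp
  have cx: "corr K (Var x) (Var x)" using xn by (auto intro: cVar)
  have "corr K (vapp v0 x) (vapp v1 x)"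
  proof (cases v0)
    case (Var w)
    then have "v1 = Var w" "w \<noteq> K" using corr_Var_inv[of K w v1] c by auto
    then show ?thesis using Var cx by (auto intro: cApp cVar)
  next
    case (Lam z b)
    then obtain z1 b1 where "v1 = Lam z1 b1" using corr_Lam_inv c by blast
    then show ?thesis using Lam beta_corr[of K z b z1 b1 "Var x" "Var x"] c cx by (simp add: subst_def)
  qed (use v in auto)
  then show ?thesis using xn fe v corr_val[OF c] by (intro rnf_val[of v0 v1 x]) (auto intro: corr_RR)
qed

lemma ectx_split: "is_ectx E \<Longrightarrow> is_pctx E \<or> (\<exists>E' F. is_ectx E' \<and> is_pctx F \<and> E = ccomp E' (CReset F))"
proof (induct E)
  case Hole then show ?case by simp
next
  case (CAppR v C)
  have vC: "is_val v" "is_ectx C" using CAppR.prems by simp_all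
  from CAppR.hyps[OF vC(2)] show ?case
  proof
    assume "is_pctx C" then show ?thesis using vC by simp
  next
    assume "\<exists>E' F. is_ectx E' \<and> is_pctx F \<and> C = ccomp E' (CReset F)"
    then obtain E' F where h: "is_ectx E'" "is_pctx F" "C = ccomp E' (CReset F)" by blast
    have "is_ectx (CAppR v E')" "CAppR v C = ccomp (CAppR v E') (CReset F)" using h vC by simp_all
    then show ?thesis using h(2) by blast
  qed
next
  case (CAppL C u)
  have vC: "is_ectx C" using CAppL.prems by simp_all
  from CAppL.hyps[OF vC] show ?case
  proof
    assume "is_pctx C" then show ?thesis by simp
  next
    assume "\<exists>E' F. is_ectx E' \<and> is_pctx F \<and> C = ccomp E' (CReset F)"
    then obtain E' F where h: "is_ectx E'" "is_pctx F" "C = ccomp E' (CReset F)" by blast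
    have "is_ectx (CAppL E' u)" "CAppL C u = ccomp (CAppL E' u) (CReset F)" using h by simp_all
    then show ?thesis using h(2) by blast
  qed
next
  case (CReset C)
  have vC: "is_ectx C" using CReset.prems by simp_all
  from CReset.hyps[OF vC] show ?case
  proof
    assume p: "is_pctx C"
    have "is_ectx Hole" "CReset C = ccomp Hole (CReset C)" by simp_all
    then show ?thesis using p by blast
  next
    assume "\<exists>E' F. is_ectx E' \<and> is_pctx F \<and> C = ccomp E' (CReset F)"
    then obtain E' F where h: "is_ectx E'" "is_pctx F" "C = ccomp E' (CReset F)" by blast
    have "is_ectx (CReset E')" "CReset C = ccomp (CReset E') (CReset F)" using h by simp_all
    then show ?thesis using h(2) by blast
  qed
qed

lemma ctxrel: assumes c: "ccorr K E E1" and e: "is_ectx E" shows "ctx_rel (RR K) E E1"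
proof -
  have fe: "fvc E1 = fvc E" using c by (rule ccorr_fvc)
  define z where "z = fresh (fvc E \<union> {K})"
  have zn: "z \<notin> fvc E \<union> {K}" unfolding z_def by (rule fresh_notin) simp
  have cz: "corr K (Var z) (Var z)" using zn by (auto intro: cVar)
  from ectx_split[OF e] show ?thesis
  proof
    assume p: "is_pctx E"
    have r: "RR K (plug E (Var z)) (plug E1 (Var z))" by (rule corr_RR, rule ccorr_plug[OF c cz])
    have p1: "is_pctx E1" using p ccorr_pctx[OF c] by simp
    have "z \<notin> fvc E" "z \<notin> fvc E1" using zn fe by auto
    then have "\<exists>x. x \<notin> fvc E \<and> x \<notin> fvc E1 \<and> RR K (plug E (Var x)) (plug E1 (Var x))" using r by blast
    then show ?thesis unfolding ctx_rel_def using p p1 by blast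
  next
    assume "\<exists>E' F. is_ectx E' \<and> is_pctx F \<and> E = ccomp E' (CReset F)"
    then obtain E' F where h: "is_ectx E'" "is_pctx F" "E = ccomp E' (CReset F)" by blast
    from split_fwd[of K E' F E1] c h obtain E1' F1 where h2: "E1 = ccomp E1' (CReset F1)" "ccorr K E' E1'"
      "ccorr K (CReset F) (CReset F1)" by auto
    have p1: "is_pctx F1" using creset_pctx[OF h2(3)] h by simp
    have e1: "is_ectx E1'" using ccorr_ectx[OF h2(2)] h by simp
    have r1: "RR K (plug E' (Var z)) (plug E1' (Var z))" by (rule corr_RR, rule ccorr_plug[OF h2(2) cz])
    have r2: "RR K (Reset (plug F (Var z))) (Reset (plug F1 (Var z)))"
      using ccorr_plug[OF h2(3) cz] by (simp add: corr_RR)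
    have zz: "z \<notin> fvc E" "z \<notin> fvc E1" using zn fe by auto
    have "is_ectx E' \<and> is_pctx F \<and> is_ectx E1' \<and> is_pctx F1 \<and>
        E = ccomp E' (CReset F) \<and> E1 = ccomp E1' (CReset F1) \<and>
        z \<notin> fvc E \<and> z \<notin> fvc E1 \<and>
        RR K (plug E' (Var z)) (plug E1' (Var z)) \<and>
        RR K (Reset (plug F (Var z))) (Reset (plug F1 (Var z)))"
      using h h2 p1 e1 r1 r2 zz by simp
    then show ?thesis unfolding ctx_rel_def by blast
  qed
qed

lemma krnf:
  assumes e0: "is_ectx E0" and c: "ccorr K E0 E1" and cm: "corr K m0 m1" and v: "is_val m0"
  shows "rnf (RR K) (plug E0 (Reset (App (Var K) m0))) (plug E1 (Reset (Reset (App (Var K) m1))))"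
proof -
  have fe: "fvc E1 = fvc E0" using c by (rule ccorr_fvc)
  have e1: "is_ectx E1" using ccorr_ectx[OF c] e0 by simp
  define z where "z = fresh (fvc E0 \<union> {K})"
  have zn: "z \<notin> fvc E0 \<union> {K}" unfolding z_def by (rule fresh_notin) simp
  have cz: "corr K (Var z) (Var z)" using zn by (auto intro: cVar)
  have r1: "RR K (plug E0 (Var z)) (plug (ccomp E1 (CReset Hole)) (Var z))"
    unfolding RR_def using e1 ccorr_plug[OF c cz] by (auto simp: plug_ccomp)
  have r2: "RR K (Reset (plug Hole (Var z))) (Reset (plug Hole (Var z)))" using cz by (simp add: corr_RR cReset)
  have as: "ccomp E1 (CReset (CReset Hole)) = ccomp (ccomp E1 (CReset Hole)) (CReset Hole)" by (induct E1) auto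
  have zz: "z \<notin> fvc (ccomp E0 (CReset Hole))" "z \<notin> fvc (ccomp E1 (CReset (CReset Hole)))"
    using zn fe by (simp_all add: fvc_ccomp)
  have "is_ectx E0 \<and> is_pctx Hole \<and> is_ectx (ccomp E1 (CReset Hole)) \<and> is_pctx Hole \<and>
        ccomp E0 (CReset Hole) = ccomp E0 (CReset Hole) \<and>
        ccomp E1 (CReset (CReset Hole)) = ccomp (ccomp E1 (CReset Hole)) (CReset Hole) \<and>
        z \<notin> fvc (ccomp E0 (CReset Hole)) \<and> z \<notin> fvc (ccomp E1 (CReset (CReset Hole))) \<and>
        RR K (plug E0 (Var z)) (plug (ccomp E1 (CReset Hole)) (Var z)) \<and>
        RR K (Reset (plug Hole (Var z))) (Reset (plug Hole (Var z)))"
    using e0 e1 as zz r1 r2 by simp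
  then have cr: "ctx_rel (RR K) (ccomp E0 (CReset Hole)) (ccomp E1 (CReset (CReset Hole)))"
    unfolding ctx_rel_def by blast
  have "rnf (RR K) (plug (ccomp E0 (CReset Hole)) (App (Var K) m0)) (plug (ccomp E1 (CReset (CReset Hole))) (App (Var K) m1))"
    by (rule rnf_open) (use e0 e1 v corr_val[OF cm] cr val_rnf[OF cm v] in simp_all)
  then show ?thesis by (simp add: plug_ccomp)
qed

lemma eval_irred: "irreducible u \<Longrightarrow> eval u n \<Longrightarrow> n = u"
proof -
  assume ir: "irreducible u" and e: "eval u n"
  from e have "step\<^sup>*\<^sup>* u n" unfolding eval_def by simp
  then show "n = u"
  proof (cases rule: converse_rtranclpE)
    case (step y) then show ?thesis using ir unfolding irreducible_def by blast
  qed simp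
qed

lemma eval_self: "irreducible u \<Longrightarrow> eval u u" unfolding eval_def by simp

lemma eval_prepend: "step a b \<Longrightarrow> eval b n \<Longrightarrow> eval a n"
  unfolding eval_def using converse_rtranclp_into_rtranclp[of step a b n] by blast

lemma nf_lemma:
  assumes c: "corr K n0 m" and irr: "irreducible n0"
  shows "\<exists>n1. eval m n1 \<and> rnf (RR K) n0 n1"
proof -
  have fe: "fv m = fv n0" using c by (rule corr_fv)
  from progress[of n0] show ?thesis
  proof (elim disjE exE conjE)
    fix w assume "step n0 w" then show ?thesis using irr unfolding irreducible_def by blast
  next
    assume v: "is_val n0"
    then have "is_val m" using corr_val[OF c] by simp
    then show ?thesis using val_rnf[OF c v] irred_val eval_self by blast
  next
    fix F k t assume p: "is_pctx F" and n0: "n0 = plug F (Shift k t)"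
    have "\<exists>X s1. m = plug X s1 \<and> ccorr K F X \<and> corr K (Shift k t) s1"
      using decomp_fwd[of K F "Shift k t" m] c n0 by simp
    then obtain F1 s1 where h: "m = plug F1 s1" "ccorr K F F1" "corr K (Shift k t) s1" by blast
    from corr_Shift_inv[OF h(3)] obtain k1 t1 where s1: "s1 = Shift k1 t1" by blast
    have p1: "is_pctx F1" using ccorr_pctx[OF h(2)] p by simp
    have ev: "eval m m" using irred_ctrl[OF p1] h s1 eval_self by simp
    define k3 where "k3 = fresh (fv n0 \<union> {K})"
    have k3n: "k3 \<notin> fv n0 \<union> {K}" unfolding k3_def by (rule fresh_notin) simp
    define x3 where "x3 = fresh (fv n0 \<union> {K, k3})"
    have x3n: "x3 \<notin> fv n0 \<union> {K, k3}" unfolding x3_def by (rule fresh_notin) simp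
    have fF: "fvc F \<subseteq> fv n0" using n0 by (simp add: fv_plug)
    have cc: "ccorr K (CReset (CAppR (Var k3) F)) (CReset (CAppR (Var k3) F1))"
      using k3n h(2) by (auto intro: ccReset ccAppR cVar)
    have fe2: "fvc F1 = fvc F" using h(2) by (rule ccorr_fvc)
    have "corr K (Reset (subst (Lam x3 (plug (CReset (CAppR (Var k3) F)) (Var x3))) k t))
                 (Reset (subst (Lam x3 (plug (CReset (CAppR (Var k3) F1)) (Var x3))) k1 t1))"
      by (rule shift_res_corr[OF cc]) (use h(3) s1 x3n fF fe2 in auto)
    then have r: "RR K (Reset (subst (Lam x3 (Reset (App (Var k3) (plug F (Var x3))))) k t))
                 (Reset (subst (Lam x3 (Reset (App (Var k3) (plug F1 (Var x3))))) k1 t1))"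
      by (simp add: corr_RR)
    have f1: "k3 \<notin> fv (plug F (Shift k t))" "k3 \<notin> fv (plug F1 (Shift k1 t1))"
      "x3 \<notin> fv (plug F (Shift k t))" "x3 \<notin> fv (plug F1 (Shift k1 t1))" "x3 \<noteq> k3"
      using k3n x3n n0 fe h s1 by auto
    have "rnf (RR K) (plug F (Shift k t)) (plug F1 (Shift k1 t1))"
      by (rule rnf_ctrl[where R="RR K" and ?F0.0=F and ?F1.0=F1 and ?k0.0=k and ?t0.0=t and ?k1.0=k1 and ?t1.0=t1 and k'=k3 and x=x3, OF p p1 f1 r])
    then show ?thesis using ev n0 h s1 by blast
  next
    fix E x v assume e: "is_ectx E" and v: "is_val v" and n0: "n0 = plug E (App (Var x) v)"
    have "(\<exists>E1 r1. m = plug E1 r1 \<and> ccorr K E E1 \<and> corr K (App (Var x) v) r1) \<or>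
      (\<exists>m0 E0' E1 y m1. App (Var x) v = App (Var K) m0 \<and> E = ccomp E0' (CReset Hole) \<and>
        m = plug E1 (Reset (App (Bv K y) m1)) \<and> y \<noteq> K \<and> ccorr K E0' E1 \<and> corr K m0 m1)"
      by (rule decomp_fwd) (use c n0 in simp_all)
    then show ?thesis
    proof
      assume "\<exists>E1 r1. m = plug E1 r1 \<and> ccorr K E E1 \<and> corr K (App (Var x) v) r1"
      then obtain E1 r1 where h: "m = plug E1 r1" "ccorr K E E1" "corr K (App (Var x) v) r1" by blast
      from corr_App_inv[OF h(3)] obtain a1 v1 where h2: "r1 = App a1 v1" "corr K (Var x) a1" "corr K v v1" by blast
      have a1: "a1 = Var x" using corr_Var_inv[OF h2(2)] by simp
      have e1: "is_ectx E1" using ccorr_ectx[OF h(2)] e by simp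
      have v1: "is_val v1" using corr_val[OF h2(3)] v by simp
      have ev: "eval m m" using irred_open[OF e1 v1] h h2 a1 eval_self by simp
      have "rnf (RR K) (plug E (App (Var x) v)) (plug E1 (App (Var x) v1))"
        by (rule rnf_open[OF e e1 v v1 ctxrel[OF h(2) e] val_rnf[OF h2(3) v]])
      then show ?thesis using ev n0 h h2 a1 by blast
    next
      assume "\<exists>m0 E0' E1 y m1. App (Var x) v = App (Var K) m0 \<and> E = ccomp E0' (CReset Hole) \<and>
        m = plug E1 (Reset (App (Bv K y) m1)) \<and> y \<noteq> K \<and> ccorr K E0' E1 \<and> corr K m0 m1"
      then obtain m0 E0' E1 y m1 where h: "App (Var x) v = App (Var K) m0" "E = ccomp E0' (CReset Hole)"
        "m = plug E1 (Reset (App (Bv K y) m1))" "y \<noteq> K" "ccorr K E0' E1" "corr K m0 m1" by blast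
      have e0: "is_ectx E0'" using h(2) e by simp
      have e1: "is_ectx E1" using ccorr_ectx[OF h(5)] e0 by simp
      have v1: "is_val m1" using corr_val[OF h(6)] v h(1) by simp
      have sb: "subst m1 y (Reset (App (Var K) (Var y))) = Reset (App (Var K) m1)" using h(4) by (simp add: subst_def)
      have "step (plug (ccomp E1 (CReset Hole)) (App (Bv K y) m1)) (plug (ccomp E1 (CReset Hole)) (subst m1 y (Reset (App (Var K) (Var y)))))"
        by (rule step_ctx) (use step_beta0[OF v1] e1 in \<open>simp_all add: Bv_def\<close>)
      then have st: "step m (plug E1 (Reset (Reset (App (Var K) m1))))" using h(3) sb by (simp add: plug_ccomp)
      have "irreducible (plug (ccomp E1 (CReset (CReset Hole))) (App (Var K) m1))" by (rule irred_open) (use e1 v1 in simp_all)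
      then have ir: "irreducible (plug E1 (Reset (Reset (App (Var K) m1))))" by (simp add: plug_ccomp)
      have ev: "eval m (plug E1 (Reset (Reset (App (Var K) m1))))"
        using st ir unfolding eval_def by auto
      have "rnf (RR K) (plug E0' (Reset (App (Var K) m0))) (plug E1 (Reset (Reset (App (Var K) m1))))"
        by (rule krnf[OF e0 h(5) h(6)]) (use v h(1) in simp)
      then show ?thesis using ev n0 h(1) h(2) by (auto simp: plug_ccomp)
    qed
  qed
qed

lemma fwd_sim: "corr K u0 u1 \<Longrightarrow> eval u0 n0 \<Longrightarrow> \<exists>n1. eval u1 n1 \<and> rnf (RR K) n0 n1"
proof -
  assume c: "corr K u0 u1" and e: "eval u0 n0"
  then have st: "step\<^sup>*\<^sup>* u0 n0" and ir: "irreducible n0" unfolding eval_def by auto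
  from st c show ?thesis
  proof (induct arbitrary: u1 rule: converse_rtranclp_induct)
    case base then show ?case using nf_lemma ir by blast
  next
    case (step y z)
    from fwd_step[OF step(4) step(1)] obtain u1' where "step u1 u1'" "corr K z u1'" by blast
    with step(3) obtain n1 where "eval u1' n1" "rnf (RR K) n0 n1" by blast
    then show ?case using eval_prepend[OF \<open>step u1 u1'\<close>] by blast
  qed
qed

lemma bwd_sim: "corr K u0 u1 \<Longrightarrow> eval u1 n1 \<Longrightarrow> \<exists>n0. eval u0 n0 \<and> rnf (RR K) n0 n1"
proof -
  assume c: "corr K u0 u1" and e: "eval u1 n1"
  then have st: "step\<^sup>*\<^sup>* u1 n1" and ir: "irreducible n1" unfolding eval_def by auto
  from st c show ?thesis
  proof (induct arbitrary: u0 rule: converse_rtranclp_induct)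
    case base
    have ir0: "irreducible u0"
      unfolding irreducible_def using fwd_step[OF base] ir unfolding irreducible_def by blast
    from nf_lemma[OF base ir0] obtain n1' where "eval n1 n1'" "rnf (RR K) u0 n1'" by blast
    then show ?case using eval_irred[OF ir] eval_self[OF ir0] by blast
  next
    case (step y z)
    from bwd_step[OF step(4) step(1)] show ?case
    proof
      assume "\<exists>u0'. step u0 u0' \<and> corr K u0' z"
      then obtain u0' where "step u0 u0'" "corr K u0' z" by blast
      with step(3) obtain n0 where "eval u0' n0" "rnf (RR K) n0 n1" by blast
      then show ?case using eval_prepend[OF \<open>step u0 u0'\<close>] by blast
    next
      assume "KST K u0 z"
      then obtain E0 E1 m0 m1 where h: "is_ectx E0" "is_ectx E1" "is_val m0" "is_val m1" "ccorr K E0 E1"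
        "corr K m0 m1" "u0 = plug E0 (Reset (App (Var K) m0))" "z = plug E1 (Reset (Reset (App (Var K) m1)))"
        unfolding KST_def by blast
      have "irreducible (plug (ccomp E1 (CReset (CReset Hole))) (App (Var K) m1))" by (rule irred_open) (use h in simp_all)
      then have irz: "irreducible z" using h by (simp add: plug_ccomp)
      have "n1 = z" using eval_irred[OF irz] step(2) ir unfolding eval_def by simp
      have "irreducible (plug (ccomp E0 (CReset Hole)) (App (Var K) m0))" by (rule irred_open) (use h in simp_all)
      then have ir0: "irreducible u0" using h by (simp add: plug_ccomp)
      have "rnf (RR K) u0 z" using krnf[OF h(1) h(5) h(6) h(3)] h by simp
      then show ?case using \<open>n1 = z\<close> eval_self[OF ir0] by blast
    qed
  qed
qed

lemma eval_det_step: "eval a n \<Longrightarrow> step a b \<Longrightarrow> (\<forall>w. step a w \<longrightarrow> w = b) \<Longrightarrow> eval b n"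
proof -
  assume e: "eval a n" and s: "step a b" and d: "\<forall>w. step a w \<longrightarrow> w = b"
  from e have st: "step\<^sup>*\<^sup>* a n" and ir: "irreducible n" unfolding eval_def by auto
  from st show "eval b n"
  proof (rule converse_rtranclpE)
    assume "a = n" then show ?thesis using ir s unfolding irreducible_def by blast
  next
    fix y assume "step a y" "step\<^sup>*\<^sup>* y n" then show ?thesis using d ir unfolding eval_def by auto
  qed
qed

lemma RR_fwd: "RR K u0 u1 \<Longrightarrow> eval u0 n0 \<Longrightarrow> \<exists>n1. eval u1 n1 \<and> rnf (RR K) n0 n1"
proof -
  assume r: "RR K u0 u1" and e: "eval u0 n0"
  have "corr K u0 u1 \<or> (\<exists>E z. is_ectx E \<and> u1 = plug E (Reset (Var z)) \<and> corr K u0 (plug E (Var z)))"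
    using r unfolding RR_def .
  then show ?thesis
  proof (elim disjE exE conjE)
    assume "corr K u0 u1" then show ?thesis using fwd_sim e by blast
  next
    fix E z assume h: "is_ectx E" "u1 = plug E (Reset (Var z))" "corr K u0 (plug E (Var z))"
    from fwd_sim[OF h(3) e] obtain n1 where "eval (plug E (Var z)) n1" "rnf (RR K) n0 n1" by blast
    moreover have "step u1 (plug E (Var z))" using step.reset[OF h(1), of "Var z"] h(2) by simp
    ultimately show ?thesis using eval_prepend by blast
  qed
qed

lemma RR_bwd: "RR K u0 u1 \<Longrightarrow> eval u1 n1 \<Longrightarrow> \<exists>n0. eval u0 n0 \<and> rnf (RR K) n0 n1"
proof -
  assume r: "RR K u0 u1" and e: "eval u1 n1"
  have "corr K u0 u1 \<or> (\<exists>E z. is_ectx E \<and> u1 = plug E (Reset (Var z)) \<and> corr K u0 (plug E (Var z)))"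
    using r unfolding RR_def .
  then show ?thesis
  proof (elim disjE exE conjE)
    assume "corr K u0 u1" then show ?thesis using bwd_sim e by blast
  next
    fix E z assume h: "is_ectx E" "u1 = plug E (Reset (Var z))" "corr K u0 (plug E (Var z))"
    have st: "step u1 (plug E (Var z))" using step.reset[OF h(1), of "Var z"] h(2) by simp
    have "\<forall>w. step u1 w \<longrightarrow> w = plug E (Var z)" using step_reset_uniq[OF h(1), of "Var z"] h(2) by simp
    then have "eval (plug E (Var z)) n1" using eval_det_step[OF e st] by blast
    then show ?thesis using bwd_sim[OF h(3)] by blast
  qed
qed

lemma ctx_rel_mono: "ctx_rel R E0 E1 \<Longrightarrow> (\<And>a b. R a b \<Longrightarrow> R' a b) \<Longrightarrow> ctx_rel R' E0 E1"
  unfolding ctx_rel_def by blast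

lemma rnf_mono: "rnf R a b \<Longrightarrow> (\<And>a b. R a b \<Longrightarrow> R' a b) \<Longrightarrow> rnf R' a b"
proof (induct rule: rnf.induct)
  case (rnf_val v0 v1 x) then show ?case by (auto intro: rnf.rnf_val)
next
  case (rnf_open E0 E1 v0 v1 x)
  then show ?case using ctx_rel_mono[OF rnf_open(5)] by (auto intro: rnf.rnf_open)
next
  case (rnf_ctrl F0 F1 k' k0 t0 k1 t1 x)
  then show ?case by (intro rnf.rnf_ctrl) auto
qed

lemma ctx_rel_flip: "ctx_rel R E0 E1 \<Longrightarrow> ctx_rel (conversep R) E1 E0"
  unfolding ctx_rel_def by blast

lemma rnf_flip: "rnf R a b \<Longrightarrow> rnf (conversep R) b a"
proof (induct rule: rnf.induct)
  case (rnf_val v0 v1 x) then show ?case by (auto intro: rnf.rnf_val)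
next
  case (rnf_open E0 E1 v0 v1 x)
  show ?case by (rule rnf.rnf_open[OF rnf_open(2) rnf_open(1) rnf_open(4) rnf_open(3) ctx_rel_flip[OF rnf_open(5)] rnf_open(7)])
next
  case (rnf_ctrl F0 F1 k' k0 t0 k1 t1 x)
  then show ?case by (intro rnf.rnf_ctrl) auto
qed

lemma top_corr:
  assumes kt: "k' \<notin> fvc F \<union> fv t" and xF: "x \<notin> fvc F" and xk: "x \<noteq> k'"
    and Kt: "K \<notin> fv t" and KF: "K \<notin> fvc F" and Kk': "K \<noteq> k'" and yK: "y \<noteq> K" and yF: "y \<notin> fvc F"
  shows "corr K (Reset (subst (Lam y (Reset (App (Var K) (plug F (Var y))))) k t))
                (Reset (subst (Bv K y) k' (subst (Lam x (Reset (App (Var k') (plug F (Var x))))) k t)))"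
proof -
  define A where "A = Lam y (Reset (App (Var K) (plug F (Var y))))"
  define b where "b = Reset (App (Var k') (plug F (Var x)))"
  define C where "C = Lam x b"
  define \<rho> where "\<rho> = Var(k' := Bv K y)"
  have key: "corr K A (sub \<rho> C)"
  proof -
    define xc where "xc = fresh (\<Union>w\<in>fv b - {x}. fv (\<rho> w))"
    have xcn: "xc \<notin> (\<Union>w\<in>fv b - {x}. fv (\<rho> w))" unfolding xc_def by (rule fresh_notin) simp
    have Cs: "sub \<rho> C = Lam xc (sub (\<rho>(x := Var xc)) b)" unfolding C_def sub.simps Let_def xc_def ..
    have "k' \<in> fv b - {x}" using xk by (simp add: b_def)
    moreover have "K \<in> fv (\<rho> k')" using yK by (simp add: \<rho>_def)
    ultimately have xcK: "xc \<noteq> K" using xcn by blast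
    have xcF: "xc \<notin> fvc F"
    proof
      assume "xc \<in> fvc F"
      then have "xc \<in> fv b - {x}" "\<rho> xc = Var xc" using xF kt by (auto simp: b_def fv_plug \<rho>_def)
      then show False using xcn by force
    qed
    define z where "z = fresh (fv A \<union> fv (sub \<rho> C) \<union> {K})"
    have zn: "z \<notin> fv A \<union> fv (sub \<rho> C) \<union> {K}" unfolding z_def by (rule fresh_notin) simp
    define G where "G = subc Var F"
    have fG: "fvc G = fvc F" by (simp add: G_def fvc_subc)
    have L: "sub (Var(y := Var z)) (Reset (App (Var K) (plug F (Var y)))) = Reset (App (Var K) (plug G (Var z)))"
    proof -
      have "subc (Var(y := Var z)) F = G" unfolding G_def by (rule subc_cong) (use yF in auto)
      then show ?thesis using yK by (simp add: sub_plug)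
    qed
    obtain y2 where y2: "y2 \<noteq> K" "sub (Var(xc := Var z)) (Bv K y) = Bv K y2"
      using Bv_sub[of "Var(xc := Var z)" K y] xcK yK by auto
    have R: "sub (Var(xc := Var z)) (sub (\<rho>(x := Var xc)) b) = Reset (App (Bv K y2) (plug G (Var z)))"
    proof -
      have sc: "subc (\<lambda>w. sub (Var(xc := Var z)) ((\<rho>(x := Var xc)) w)) F = G" unfolding G_def
      proof (rule subc_cong)
        fix w assume w: "w \<in> fvc F"
        then have "w \<noteq> x" "w \<noteq> k'" "w \<noteq> xc" using xF kt xcF by auto
        then show "sub (Var(xc := Var z)) ((\<rho>(x := Var xc)) w) = Var w" by (simp add: \<rho>_def)
      qed
      have "sub (Var(xc := Var z)) (sub (\<rho>(x := Var xc)) b) = sub (\<lambda>w. sub (Var(xc := Var z)) ((\<rho>(x := Var xc)) w)) b"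
        by (rule sub_comp)
      also have "\<dots> = Reset (App (sub (Var(xc := Var z)) (Bv K y)) (plug G (Var z)))"
        unfolding b_def sub.simps sub_plug sc using xk by (simp add: \<rho>_def)
      finally show ?thesis using y2 by simp
    qed
    have c: "corr K (Reset (App (Var K) (plug G (Var z)))) (Reset (App (Bv K y2) (plug G (Var z))))"
      by (rule cRK[OF y2(1)], rule corr_refl) (use zn fG KF in \<open>auto simp: fv_plug\<close>)
    have z1: "z \<noteq> K" "z \<notin> fv (Lam y (Reset (App (Var K) (plug F (Var y)))))"
      "z \<notin> fv (Lam xc (sub (\<rho>(x := Var xc)) b))" using zn Cs by (auto simp: A_def)
    have "corr K (Lam y (Reset (App (Var K) (plug F (Var y))))) (Lam xc (sub (\<rho>(x := Var xc)) b))"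
      by (rule cLam[OF z1]) (use c L R in simp)
    then show ?thesis unfolding A_def Cs .
  qed
  have e1: "subst (Bv K y) k' (subst C k t) = sub (\<lambda>w. sub \<rho> ((Var(k := C)) w)) t"
    by (simp add: subst_def sub_comp \<rho>_def)
  have "corr K (sub (Var(k := A)) t) (sub (\<lambda>w. sub \<rho> ((Var(k := C)) w)) t)"
  proof (rule corr_sub[OF corr_refl[OF Kt]], rule ballI)
    fix w assume w: "w \<in> fv t"
    then have wK: "w \<noteq> K" "w \<noteq> k'" using Kt kt by auto
    show "(w = K \<longrightarrow> (Var(k := A)) w = Var K \<and> sub \<rho> ((Var(k := C)) w) = Var K) \<and>
          (w \<noteq> K \<longrightarrow> corr K ((Var(k := A)) w) (sub \<rho> ((Var(k := C)) w)))"
    proof (cases "w = k")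
      case True then show ?thesis using key wK by simp
    next
      case False then show ?thesis using wK by (simp add: \<rho>_def cVar)
    qed
  qed
  then have "corr K (Reset (subst A k t)) (Reset (subst (Bv K y) k' (subst C k t)))"
    unfolding e1 subst_def[of A k t] by (rule cReset)
  then show ?thesis unfolding A_def C_def b_def .
qed

theorem proposition6:
  assumes "is_pctx F"
    and "k' \<notin> fvc F \<union> fv t"
    and "x \<notin> fvc F"
    and "x \<noteq> k'"
  shows "rnf_bisimilar (plug F (Shift k t))
           (Shift k' (subst (Lam x (Reset (App (Var k') (plug F (Var x))))) k t))"
proof -
  define t1 where "t1 = subst (Lam x (Reset (App (Var k') (plug F (Var x))))) k t"
  define L where "L = plug F (Shift k t)"
  define Rt where "Rt = Shift k' t1"
  define K where "K = fresh (fv L \<union> fv Rt \<union> {k, k', x})"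
  have Kn: "K \<notin> fv L \<union> fv Rt \<union> {k, k', x}" unfolding K_def by (rule fresh_notin) simp
  define y where "y = fresh (fv L \<union> fv Rt \<union> {k, k', x, K})"
  have yn: "y \<notin> fv L \<union> fv Rt \<union> {k, k', x, K}" unfolding y_def by (rule fresh_notin) simp
  have fL: "fv L = fvc F \<union> (fv t - {k})" by (simp add: L_def fv_plug)
  have Kt: "K \<notin> fv t" and KF: "K \<notin> fvc F" and yF: "y \<notin> fvc F" using Kn yn fL by auto
  have tc: "corr K (Reset (subst (Lam y (Reset (App (Var K) (plug F (Var y))))) k t))
                (Reset (subst (Bv K y) k' t1))"
    unfolding t1_def by (rule top_corr) (use assms Kt KF Kn yn yF in auto)
  define R where "R = (\<lambda>a b. RR K a b \<or> (a = L \<and> b = Rt))"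
  have RRR: "\<And>a b. RR K a b \<Longrightarrow> R a b" by (simp add: R_def)
  have irrL: "irreducible L" using irred_ctrl[OF assms(1)] L_def by simp
  have irrR: "irreducible Rt" using irred_ctrl[of Hole k' t1] Rt_def by simp
  have rLR: "rnf R L Rt"
  proof -
    have f1: "K \<notin> fv (plug F (Shift k t))" "K \<notin> fv (plug Hole (Shift k' t1))"
      "y \<notin> fv (plug F (Shift k t))" "y \<notin> fv (plug Hole (Shift k' t1))" "y \<noteq> K"
      using Kn yn by (auto simp: L_def Rt_def)
    have r: "R (Reset (subst (Lam y (Reset (App (Var K) (plug F (Var y))))) k t))
               (Reset (subst (Lam y (Reset (App (Var K) (plug Hole (Var y))))) k' t1))"
      using tc by (simp add: R_def RR_def Bv_def)
    have "rnf R (plug F (Shift k t)) (plug Hole (Shift k' t1))"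
      by (rule rnf_ctrl[where R=R and ?F0.0=F and ?F1.0=Hole and ?k0.0=k and ?t0.0=t and ?k1.0=k' and ?t1.0=t1
            and k'=K and x=y, OF assms(1) _ f1 r]) simp
    then show ?thesis by (simp add: L_def Rt_def)
  qed
  have sim1: "rnf_sim R"
    unfolding rnf_sim_def
  proof (intro allI impI)
    fix t0 t1 t0' assume r: "R t0 t1" and e: "eval t0 t0'"
    show "\<exists>t1'. eval t1 t1' \<and> rnf R t0' t1'"
    proof (cases "RR K t0 t1")
      case True
      from RR_fwd[OF True e] obtain n1 where "eval t1 n1" "rnf (RR K) t0' n1" by blast
      moreover have "rnf R t0' n1" by (rule rnf_mono[OF \<open>rnf (RR K) t0' n1\<close> RRR])
      ultimately show ?thesis by blast
    next
      case False
      then have "t0 = L" "t1 = Rt" using r R_def by auto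
      then have "t0' = L" using eval_irred[OF irrL] e by simp
      then show ?thesis using rLR eval_self[OF irrR] \<open>t1 = Rt\<close> by blast
    qed
  qed
  have sim2: "rnf_sim (conversep R)"
    unfolding rnf_sim_def
  proof (intro allI impI)
    fix t0 t1 t0' assume r: "conversep R t0 t1" and e: "eval t0 t0'"
    then have r': "R t1 t0" by simp
    show "\<exists>t1'. eval t1 t1' \<and> rnf (conversep R) t0' t1'"
    proof (cases "RR K t1 t0")
      case True
      from RR_bwd[OF True e] obtain n0 where "eval t1 n0" "rnf (RR K) n0 t0'" by blast
      moreover have "rnf R n0 t0'" by (rule rnf_mono[OF \<open>rnf (RR K) n0 t0'\<close> RRR])
      ultimately show ?thesis using rnf_flip by blast
    next
      case False
      then have "t1 = L" "t0 = Rt" using r' R_def by auto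
      then have "t0' = Rt" using eval_irred[OF irrR] e by simp
      then show ?thesis using rnf_flip[OF rLR] eval_self[OF irrL] \<open>t1 = L\<close> by blast
    qed
  qed
  have "rnf_bisim R" using sim1 sim2 by (simp add: rnf_bisim_def)
  moreover have "R L Rt" by (simp add: R_def)
  ultimately have "rnf_bisimilar L Rt" unfolding rnf_bisimilar_def by blast
  then show ?thesis by (simp add: L_def Rt_def t1_def)
qed

end
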